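(* Fix $0<p<1$ and set $N=p/(1-p)$. With all operators on $\mathcal H_j$ transported to the Fock space via $W_j$ (i.e. $X\mapsto W_jXW_j^*$), the following hold as $j\to\infty$ through the half-integers: (1) $\rho_{j,p}\to\rho_{0,N}$ in trace norm; (2) for every fixed $z\in\mathbb{C}$, $|j,\tfrac{z}{\sqrt{2j}})(j,\tfrac{z}{\sqrt{2j}}|\to|z)(z|$ in trace norm; (3) $\mathrm{Tr}\,\rho_{j,p}(a-\tfrac{1}{\sqrt{2j}}J_{j,+})^*(a-\tfrac{1}{\sqrt{2j}}J_{j,+})\to0$ and $\mathrm{Tr}\,\rho_{j,p}(a^*-\tfrac{1}{\sqrt{2j}}J_{j,-})^*(a^*-\tfrac{1}{\sqrt{2j}}J_{j,-})\to0$; (4) $\mathrm{Tr}\,\rho_{j,p}(Q-\tfrac1{\sqrt j}J_{j,1})^2\to0$ and $\mathrm{Tr}\,\rho_{j,p}(P-\tfrac1{\sqrt j}J_{j,2})^2\to0$; (5) $\mathrm{Tr}\,\rho_{j,p}Q^2\to\mathrm{Tr}\,\rho_{0,N}Q^2$, $\mathrm{Tr}\,\rho_{j,p}P^2\to\mathrm{Tr}\,\rho_{0,N}P^2$, $\mathrm{Tr}\,\rho_{j,p}(Q\circ P)\to\mathrm{Tr}\,\rho_{0,N}(Q\circ P)$; (6) $\mathrm{Tr}\,\rho_{j,p}\big((Q-\tfrac1{\sqrt j}J_{j,1})\circ Y\big)\to0$ and $\mathrm{Tr}\,\rho_{j,p}\big((P-\tfrac1{\sqrt j}J_{j,2})\circ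 Y\big)\to0$ for $Y\in\{Q,P\}$.
   Context: For a half-integer $j\ge0$, $\mathcal H_j$ is the spin-$j$ representation space of $\mathfrak{su}(2)$ with orthonormal basis $|j,m\rangle$, $m=j,j-1,\dots,-j$, and generators $J_{j,1},J_{j,2},J_{j,3}$ with $J_{j,3}|j,m\rangle=m|j,m\rangle$, $J_{j,\pm}=J_{j,1}\pm iJ_{j,2}$, $J_{j,+}|j,m\rangle=\sqrt{(j-m)(j+m+1)}|j,m+1\rangle$, $J_{j,-}|j,m\rangle=\sqrt{(j-m+1)(j+m)}|j,m-1\rangle$. Fock space: $\ell^2$ with number basis $|n\rangle$, $n\ge0$; $a|n\rangle=\sqrt n|n-1\rangle$, $Q=(a+a^* )/\sqrt2$, $P=(a-a^* )/(i\sqrt2)$, $X\circ Y=(XY+YX)/2$. The isometry $W_j:\mathcal H_j\to\ell^2$ is $W_j|j,m\rangle=|j-m\rangle$. Coherent vector: $|z)=e^{-|z|^2/2}\sum_{n\ge0}\frac{z^n}{\sqrt{n!}}|n\rangle$. Thermal state: $\rho_{0,N}=\frac1{N+1}\sum_{n\ge0}(\frac{N}{N+1})^n|n\rangle\langle n|$. Spin state: $\rho_{j,p}=\frac{1-p}{1-p^{2j+1}}\sum_{m=-j}^jp^{j-m}|j,m\rangle\langle j,m|$. Spin coherent vector for $|z|\le1$: $|j,z)=\sum_{m=-j}^j\sqrt{\binom{2j}{j+m}}\,z^{j-m}(1-|z|^2)^{(j+m)/2}|j,m\rangle$. *)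

theory Defs
  imports "HOL-Analysis.Analysis"
begin

text \<open>Operators on the Fock space l^2 are represented by their matrices in the
number basis |n>, as functions nat => nat => complex (row, column).
The spin-j space H_j is indexed by d = 2j (a natural number); j = d/2.
Operators on H_j are given by matrix elements X m' m = <j,m'|X|j,m>, with m, m'
real numbers in {-j,..,j}; vectors on H_j are functions of m.\<close>

type_synonym fmat = "nat \<Rightarrow> nat \<Rightarrow> complex"

definition mmul :: "fmat \<Rightarrow> fmat \<Rightarrow> fmat" where
  "mmul X Y = (\<lambda>m n. \<Sum>\<^sub>\<infinity>k. X m k * Y k n)"

definition adj :: "fmat \<Rightarrow> fmat" where
  "adj X = (\<lambda>m n. cnj (X n m))"

definition madd :: "fmat \<Rightarrow> fmat \<Rightarrow> fmat" where
  "madd X Y = (\<lambda>m n. X m n + Y m n)"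

definition msub :: "fmat \<Rightarrow> fmat \<Rightarrow> fmat" where
  "msub X Y = (\<lambda>m n. X m n - Y m n)"

definition smul :: "complex \<Rightarrow> fmat \<Rightarrow> fmat" where
  "smul c X = (\<lambda>m n. c * X m n)"

definition jordan :: "fmat \<Rightarrow> fmat \<Rightarrow> fmat" where
  "jordan X Y = (\<lambda>m n. (mmul X Y m n + mmul Y X m n) / 2)"

definition Tr :: "fmat \<Rightarrow> complex" where
  "Tr X = (\<Sum>\<^sub>\<infinity>n. X n n)"

text \<open>For bounded operators this is
the trace norm Tr|T| (possibly infinity).\<close>
definition orthonormal_fin :: "nat \<Rightarrow> nat \<Rightarrow> (nat \<Rightarrow> nat \<Rightarrow> complex) \<Rightarrow> bool" where
  "orthonormal_fin M K e \<longleftrightarrow>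
     (\<forall>k<K. \<forall>l<K. (\<Sum>n<M. cnj (e k n) * e l n) = (if k = l then 1 else 0))"

definition trace_norm :: "fmat \<Rightarrow> ereal" where
  "trace_norm T = (SUP (M, K, e, f) \<in> {(M, K, e, f). orthonormal_fin M K e \<and> orthonormal_fin M K f}.
      ereal (\<Sum>k<K. cmod (\<Sum>m<M. \<Sum>n<M. cnj (f k m) * T m n * e k n)))"

definition ann :: fmat where
  "ann = (\<lambda>m n. if n = m + 1 then complex_of_real (sqrt (real n)) else 0)"

definition cre :: fmat where
  "cre = adj ann"

definition Qop :: fmat where
  "Qop = smul (1 / complex_of_real (sqrt 2)) (madd ann cre)"

definition Pop :: fmat where
  "Pop = smul (1 / (\<i> * complex_of_real (sqrt 2))) (msub ann cre)"

definition proj :: "(nat \<Rightarrow> complex) \<Rightarrow> fmat" where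
  "proj v = (\<lambda>r c. v r * cnj (v c))"

definition coh :: "complex \<Rightarrow> nat \<Rightarrow> complex" where
  "coh z n = complex_of_real (exp (- (cmod z)\<^sup>2 / 2)) * z ^ n / complex_of_real (sqrt (fact n))"

definition rho_th :: "real \<Rightarrow> fmat" where
  "rho_th N = (\<lambda>r c. if r = c then complex_of_real (1 / (N + 1) * (N / (N + 1)) ^ r) else 0)"

definition Jplus :: "nat \<Rightarrow> real \<Rightarrow> real \<Rightarrow> complex" where
  "Jplus d m' m = (let j = real d / 2 in
     if m' = m + 1 then complex_of_real (sqrt ((j - m) * (j + m + 1))) else 0)"

definition Jminus :: "nat \<Rightarrow> real \<Rightarrow> real \<Rightarrow> complex" where
  "Jminus d m' m = (let j = real d / 2 in
     if m' = m - 1 then complex_of_real (sqrt ((j - m + 1) * (j + m))) else 0)"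

definition J1 :: "nat \<Rightarrow> real \<Rightarrow> real \<Rightarrow> complex" where
  "J1 d m' m = (Jplus d m' m + Jminus d m' m) / 2"

definition J2 :: "nat \<Rightarrow> real \<Rightarrow> real \<Rightarrow> complex" where
  "J2 d m' m = (Jplus d m' m - Jminus d m' m) / (2 * \<i>)"

definition rho_spin :: "nat \<Rightarrow> real \<Rightarrow> real \<Rightarrow> real \<Rightarrow> complex" where
  "rho_spin d p m' m = (let j = real d / 2 in
     if m' = m then complex_of_real ((1 - p) / (1 - p ^ (d + 1)) * p powr (j - m)) else 0)"

definition spin_coh :: "nat \<Rightarrow> complex \<Rightarrow> real \<Rightarrow> complex" where
  "spin_coh d z m = (let j = real d / 2 in
     complex_of_real (sqrt (real (d choose nat \<lfloor>j + m\<rfloor>))) * z ^ nat \<lfloor>j - m\<rfloor>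
       * complex_of_real (sqrt (1 - (cmod z)\<^sup>2) ^ nat \<lfloor>j + m\<rfloor>))"

text \<open>Transport via W_j |j,m> = |j-m>: X |-> W_j X W_j^*, v |-> W_j v.\<close>
definition Wconj :: "nat \<Rightarrow> (real \<Rightarrow> real \<Rightarrow> complex) \<Rightarrow> fmat" where
  "Wconj d X = (\<lambda>r c. if r \<le> d \<and> c \<le> d
      then X (real d / 2 - real r) (real d / 2 - real c) else 0)"

definition tvec :: "nat \<Rightarrow> (real \<Rightarrow> complex) \<Rightarrow> nat \<Rightarrow> complex" where
  "tvec d v = (\<lambda>n. if n \<le> d then v (real d / 2 - real n) else 0)"

end

theory Submission
  imports Defs
begin


lemma infsum_fin_support:
  fixes f :: "'a \<Rightarrow> 'b::{comm_monoid_add, t2_space}"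
  assumes "finite F" "\<And>x. x \<notin> F \<Longrightarrow> f x = 0"
  shows "infsum f UNIV = sum f F"
proof -
  have "infsum f UNIV = infsum f F"
    by (rule infsum_cong_neutral) (use assms in auto)
  then show ?thesis using assms by simp
qed

definition tri :: "(nat \<Rightarrow> complex) \<Rightarrow> (nat \<Rightarrow> complex) \<Rightarrow> fmat" where
  "tri a b = (\<lambda>m n. if n = Suc m then a n else if m = Suc n then b m else 0)"

lemma mmul_tri_diag:
  "mmul (tri a b) (tri c e) n n = a (Suc n) * e (Suc n) + (if n = 0 then 0 else b n * c n)"
proof (cases n)
  case 0
  have "mmul (tri a b) (tri c e) n n = sum (\<lambda>k. tri a b n k * tri c e k n) {Suc n}"
    unfolding mmul_def by (rule infsum_fin_support) (auto simp: tri_def 0)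
  then show ?thesis by (simp add: tri_def 0)
next
  case (Suc k)
  have "mmul (tri a b) (tri c e) n n = sum (\<lambda>k. tri a b n k * tri c e k n) {Suc n, k}"
    unfolding mmul_def by (rule infsum_fin_support) (auto simp: tri_def Suc)
  then show ?thesis by (simp add: tri_def Suc)
qed

lemma tri_madd: "madd (tri a b) (tri c e) = tri (\<lambda>n. a n + c n) (\<lambda>n. b n + e n)"
  by (auto simp: madd_def tri_def fun_eq_iff)
lemma tri_msub: "msub (tri a b) (tri c e) = tri (\<lambda>n. a n - c n) (\<lambda>n. b n - e n)"
  by (auto simp: msub_def tri_def fun_eq_iff)
lemma tri_smul: "smul x (tri a b) = tri (\<lambda>n. x * a n) (\<lambda>n. x * b n)"
  by (auto simp: smul_def tri_def fun_eq_iff)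
lemma tri_adj: "adj (tri a b) = tri (\<lambda>n. cnj (b n)) (\<lambda>n. cnj (a n))"
  by (auto simp: adj_def tri_def fun_eq_iff)
lemma ann_tri: "ann = tri (\<lambda>n. of_real (sqrt (real n))) (\<lambda>_. 0)"
  by (auto simp: ann_def tri_def fun_eq_iff)
lemma cre_tri: "cre = tri (\<lambda>_. 0) (\<lambda>n. of_real (sqrt (real n)))"
  by (auto simp: cre_def adj_def ann_def tri_def fun_eq_iff)

definition al :: "nat \<Rightarrow> nat \<Rightarrow> real" where
  "al d n = (if n \<le> d then sqrt (real n * (real d + 1 - real n)) else 0)"

lemma Jplus_tri: "Wconj d (Jplus d) = tri (\<lambda>n. of_real (al d n)) (\<lambda>_. 0)"
  by (auto simp: Wconj_def Jplus_def tri_def al_def fun_eq_iff Let_def; simp add: field_simps)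

lemma Jminus_tri: "Wconj d (Jminus d) = tri (\<lambda>_. 0) (\<lambda>n. of_real (al d n))"
  by (auto simp: Wconj_def Jminus_def tri_def al_def fun_eq_iff Let_def; simp add: field_simps)

lemma J1_tri: "Wconj d (J1 d) = tri (\<lambda>n. of_real (al d n) / 2) (\<lambda>n. of_real (al d n) / 2)"
proof -
  have "Wconj d (J1 d) = smul (1/2) (madd (Wconj d (Jplus d)) (Wconj d (Jminus d)))"
    by (auto simp: Wconj_def J1_def smul_def madd_def fun_eq_iff)
  then show ?thesis by (simp add: Jplus_tri Jminus_tri tri_madd tri_smul)
qed

lemma J2_tri: "Wconj d (J2 d) = tri (\<lambda>n. - (\<i> * of_real (al d n) / 2)) (\<lambda>n. \<i> * of_real (al d n) / 2)"
proof -
  have "Wconj d (J2 d) = smul (1/(2*\<i>)) (msub (Wconj d (Jplus d)) (Wconj d (Jminus d)))"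
    by (auto simp: Wconj_def J2_def smul_def msub_def fun_eq_iff)
  then show ?thesis by (simp add: Jplus_tri Jminus_tri tri_msub tri_smul)
qed

definition rc :: "nat \<Rightarrow> real \<Rightarrow> nat \<Rightarrow> real" where
  "rc d p n = (1 - p) / (1 - p ^ (d + 1)) * p ^ n"

lemma Rspin: assumes "0 < p"
  shows "Wconj d (rho_spin d p) = (\<lambda>m n. if m = n \<and> m \<le> d then complex_of_real (rc d p m) else 0)"
  using assms by (auto simp: Wconj_def rho_spin_def rc_def Let_def fun_eq_iff powr_realpow)

lemma mmul_diag_left: assumes "\<And>m n. m \<noteq> n \<Longrightarrow> R m n = 0"
  shows "mmul R Y m n = R m m * Y m n"
proof -
  have "mmul R Y m n = sum (\<lambda>k. R m k * Y k n) {m}"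
    unfolding mmul_def by (rule infsum_fin_support) (use assms in auto)
  then show ?thesis by simp
qed

lemma Tr_spin: assumes "0 < p"
  shows "Tr (mmul (Wconj d (rho_spin d p)) Y) = (\<Sum>n\<le>d. complex_of_real (rc d p n) * Y n n)"
proof -
  have "Tr (mmul (Wconj d (rho_spin d p)) Y) = sum (\<lambda>n. mmul (Wconj d (rho_spin d p)) Y n n) {..d}"
    unfolding Tr_def by (rule infsum_fin_support) (auto simp: mmul_diag_left Rspin[OF assms])
  also have "\<dots> = (\<Sum>n\<le>d. complex_of_real (rc d p n) * Y n n)"
    by (rule sum.cong) (auto simp: mmul_diag_left Rspin[OF assms])
  finally show ?thesis .
qed

lemma Tr_th: "Tr (mmul (rho_th N) Y) = infsum (\<lambda>n. complex_of_real (1 / (N + 1) * (N / (N + 1)) ^ n) * Y n n) UNIV"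
proof -
  have "\<And>n. mmul (rho_th N) Y n n = rho_th N n n * Y n n"
    by (rule mmul_diag_left) (simp add: rho_th_def)
  then show ?thesis unfolding Tr_def by (simp add: rho_th_def)
qed



lemma summ_poly:
  assumes "0 < p" "p < (1::real)"
  shows "summable (\<lambda>n. p ^ n * (real n + 2) ^ 4)"
proof -
  define R where "R = (1 + p) / (2 * p)"
  have R1: "R > 1" using assms by (simp add: R_def field_simps)
  have "(\<lambda>n. (1 + inverse (real (Suc n))) ^ 4) \<longlonglongrightarrow> 1 ^ 4"
    by (intro tendsto_power LIMSEQ_inverse_real_of_nat_add)
  then have "eventually (\<lambda>n. (1 + inverse (real (Suc n))) ^ 4 < R) sequentially"
    using R1 by (intro order_tendstoD) auto
  then obtain N where N: "\<And>n. n \<ge> N \<Longrightarrow> (1 + inverse (real (Suc n))) ^ 4 < R"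
    by (auto simp: eventually_sequentially)
  show ?thesis
  proof (rule summable_ratio_test[where c = "(1 + p) / 2" and N = N])
    show "(1 + p) / 2 < 1" using assms by simp
    fix n assume n: "n \<ge> N"
    have q: "(real (Suc n) + 2) \<le> (1 + inverse (real (Suc n))) * (real n + 2)"
      by (simp add: field_simps)
    have "(real (Suc n) + 2) ^ 4 \<le> ((1 + inverse (real (Suc n))) * (real n + 2)) ^ 4"
      by (rule power_mono[OF q]) simp
    also have "\<dots> = (1 + inverse (real (Suc n))) ^ 4 * (real n + 2) ^ 4"
      by (simp add: power_mult_distrib)
    also have "\<dots> \<le> R * (real n + 2) ^ 4"
      using N[OF n] by (intro mult_right_mono) auto
    finally have *: "(real (Suc n) + 2) ^ 4 \<le> R * (real n + 2) ^ 4" .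
    have "norm (p ^ Suc n * (real (Suc n) + 2) ^ 4) = p * p ^ n * (real (Suc n) + 2) ^ 4"
      using assms by simp
    also have "\<dots> \<le> p * p ^ n * (R * (real n + 2) ^ 4)"
      using * assms by (intro mult_left_mono) auto
    also have "\<dots> = (1 + p) / 2 * norm (p ^ n * (real n + 2) ^ 4)"
      using assms by (simp add: R_def field_simps)
    finally show "norm (p ^ Suc n * (real (Suc n) + 2) ^ 4) \<le> (1 + p) / 2 * norm (p ^ n * (real n + 2) ^ 4)" .
  qed
qed

lemma rc_bounds:
  assumes "0 < p" "p < (1::real)"
  shows "0 \<le> rc d p n" "rc d p n \<le> p ^ n"
proof -
  have "p ^ (d + 1) \<le> p" using assms by (simp add: power_le_one mult_left_le)
  moreover have "p ^ (d + 1) < 1" using calculation assms by linarith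
  ultimately have "(1 - p) / (1 - p ^ (d + 1)) \<le> 1" and "(1 - p) / (1 - p ^ (d + 1)) \<ge> 0"
    using assms by (auto simp: divide_le_eq_1)
  then show "0 \<le> rc d p n" "rc d p n \<le> p ^ n"
    using assms unfolding rc_def
    by (metis mult_nonneg_nonneg zero_le_power less_imp_le, metis mult_left_le_one_le zero_le_power less_imp_le)
qed

lemma vanish:
  assumes p: "0 < p" "p < 1" and C: "C \<ge> 0"
    and bd: "\<And>d n. 1 \<le> d \<Longrightarrow> n \<le> d \<Longrightarrow> cmod (Y d n n) \<le> C * (real n + 2) ^ 4 / real d"
  shows "(\<lambda>d. Tr (mmul (Wconj d (rho_spin d p)) (Y d))) \<longlonglongrightarrow> 0"
proof (rule Lim_null_comparison)
  define S where "S = (\<Sum>n. p ^ n * (real n + 2) ^ 4)"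
  have sm: "summable (\<lambda>n. p ^ n * (real n + 2) ^ 4)" using summ_poly p by blast
  show "(\<lambda>d. C * S / real d) \<longlonglongrightarrow> 0" by (rule lim_const_over_n)
  show "eventually (\<lambda>d. norm (Tr (mmul (Wconj d (rho_spin d p)) (Y d))) \<le> C * S / real d) sequentially"
    unfolding eventually_sequentially
  proof (intro exI allI impI)
    fix d :: nat assume d: "1 \<le> d"
    have "norm (Tr (mmul (Wconj d (rho_spin d p)) (Y d))) = norm (\<Sum>n\<le>d. complex_of_real (rc d p n) * Y d n n)"
      by (simp add: Tr_spin p)
    also have "\<dots> \<le> (\<Sum>n\<le>d. norm (complex_of_real (rc d p n) * Y d n n))"
      by (rule norm_sum)
    also have "\<dots> \<le> (\<Sum>n\<le>d. C / real d * (p ^ n * (real n + 2) ^ 4))"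
    proof (rule sum_mono)
      fix n assume "n \<in> {..d}"
      then have n: "n \<le> d" by simp
      have "norm (complex_of_real (rc d p n) * Y d n n) = rc d p n * cmod (Y d n n)"
        using rc_bounds[OF p] by (simp add: norm_mult)
      also have "\<dots> \<le> p ^ n * (C * (real n + 2) ^ 4 / real d)"
        using rc_bounds[OF p, of d n] bd[OF d n] by (intro mult_mono) auto
      finally show "norm (complex_of_real (rc d p n) * Y d n n) \<le> C / real d * (p ^ n * (real n + 2) ^ 4)"
        by (simp add: ac_simps)
    qed
    also have "\<dots> = C / real d * (\<Sum>n\<le>d. p ^ n * (real n + 2) ^ 4)"
      by (simp add: sum_distrib_left)
    also have "\<dots> \<le> C / real d * S"
      unfolding S_def using sm p C
      by (intro mult_left_mono sum_le_suminf) auto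
    finally show "norm (Tr (mmul (Wconj d (rho_spin d p)) (Y d))) \<le> C * S / real d" by simp
  qed
qed

lemma sqrt_le_self_nat: "sqrt (real n) \<le> real n"
proof -
  have "sqrt (real n) \<le> sqrt (real n * real n)"
    by (rule real_sqrt_le_mono) (cases n, auto)
  then show ?thesis by simp
qed

definition dl :: "nat \<Rightarrow> nat \<Rightarrow> real" where
  "dl d n = sqrt (real n) - al d n / sqrt (real d)"

lemma dl_bound:
  assumes d: "1 \<le> d" and n: "n \<le> d + 1"
  shows "\<bar>dl d n\<bar> \<le> (real n + 1) ^ 2 / real d"
proof (cases "n = d + 1")
  case True
  have "\<bar>dl d n\<bar> = sqrt (real n)" using True by (simp add: dl_def al_def)
  also have "sqrt (real n) \<le> real n" by (rule sqrt_le_self_nat)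
  also have "real n \<le> (real n + 1) ^ 2 / real d"
    using True d by (simp add: field_simps power2_eq_square)
  finally show ?thesis .
next
  case False
  then have nd: "n \<le> d" using n by simp
  show ?thesis
  proof (cases "n = 0")
    case True then show ?thesis by (simp add: dl_def al_def)
  next
    case False
    define x where "x = (real d + 1 - real n) / real d"
    have x0: "0 \<le> x" "x \<le> 1" using nd False d by (auto simp: x_def field_simps)
    have "al d n / sqrt (real d) = sqrt (real n) * sqrt x"
      using nd d by (simp add: al_def x_def real_sqrt_mult real_sqrt_divide)
    then have eq: "dl d n = sqrt (real n) * (1 - sqrt x)"
      by (simp add: dl_def algebra_simps)
    have "x \<le> sqrt x"
    proof -
      have "x = sqrt x * sqrt x" using x0 by simp
      also have "\<dots> \<le> sqrt x * 1" using x0 by (intro mult_left_mono) auto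
      finally show ?thesis by simp
    qed
    moreover have "sqrt x \<le> 1" using x0 by simp
    ultimately have "\<bar>1 - sqrt x\<bar> \<le> 1 - x" by simp
    also have "1 - x = (real n - 1) / real d" using d by (simp add: x_def field_simps)
    finally have h: "\<bar>1 - sqrt x\<bar> \<le> (real n - 1) / real d" .
    have "\<bar>dl d n\<bar> = sqrt (real n) * \<bar>1 - sqrt x\<bar>" by (simp add: eq abs_mult)
    also have "\<dots> \<le> real n * ((real n - 1) / real d)"
      using h by (intro mult_mono) (auto simp: sqrt_le_self_nat)
    also have "\<dots> \<le> (real n + 1) ^ 2 / real d"
      using d by (simp add: field_simps power2_eq_square)
    finally show ?thesis .
  qed
qed



lemma diag_bound:
  "cmod (mmul (tri a b) (tri c e) n n) \<le> cmod (a (Suc n)) * cmod (e (Suc n)) + cmod (b n) * cmod (c n)"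
  unfolding mmul_tri_diag by (auto intro: order_trans[OF norm_triangle_ineq] simp: norm_mult)

definition small :: "nat \<Rightarrow> (nat \<Rightarrow> complex) \<Rightarrow> bool" where
  "small d a \<longleftrightarrow> (\<forall>m \<le> d + 1. cmod (a m) \<le> (real m + 1) ^ 2 / real d)"

definition big :: "(nat \<Rightarrow> complex) \<Rightarrow> bool" where
  "big a \<longleftrightarrow> (\<forall>m. cmod (a m) \<le> real m + 1)"

lemma small0: "small d (\<lambda>_. 0)" by (simp add: small_def)
lemma big0: "big (\<lambda>_. 0)" by (simp add: big_def)

lemma ss_bound:
  assumes d: "1 \<le> d" and n: "n \<le> d" and "small d a" "small d b" "small d c" "small d e"
  shows "cmod (mmul (tri a b) (tri c e) n n) \<le> 2 * (real n + 2) ^ 4 / real d"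
proof -
  have dd: "real d \<ge> 1" using d by simp
  have A: "cmod (a (Suc n)) \<le> (real n + 2) ^ 2 / real d" "cmod (e (Suc n)) \<le> (real n + 2) ^ 2 / real d"
    using assms(3,6) n unfolding small_def by (auto dest!: spec[of _ "Suc n"] simp: add_ac)
  have B: "cmod (b n) \<le> (real n + 2) ^ 2 / real d" "cmod (c n) \<le> (real n + 2) ^ 2 / real d"
    using assms(4,5) n unfolding small_def
    by (auto dest!: spec[of _ n] intro: order_trans[OF _ divide_right_mono[OF power_mono]])
  have "cmod (mmul (tri a b) (tri c e) n n) \<le> (real n + 2) ^ 2 / real d * ((real n + 2) ^ 2 / real d) + (real n + 2) ^ 2 / real d * ((real n + 2) ^ 2 / real d)"
    using A B by (intro order_trans[OF diag_bound] add_mono mult_mono) auto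
  also have "\<dots> = 2 * (real n + 2) ^ 4 / real d * (1 / real d)"
    by (simp add: field_simps power2_eq_square power4_eq_xxxx)
  also have "\<dots> \<le> 2 * (real n + 2) ^ 4 / real d * 1"
    using dd by (intro mult_left_mono) auto
  finally show ?thesis by simp
qed

lemma sb_bound:
  assumes d: "1 \<le> d" and n: "n \<le> d" and "small d a" "small d b" "big c" "big e"
  shows "cmod (mmul (tri a b) (tri c e) n n) \<le> 2 * (real n + 2) ^ 4 / real d"
proof -
  have dd: "real d \<ge> 1" using d by simp
  have A: "cmod (a (Suc n)) \<le> (real n + 2) ^ 2 / real d" "cmod (e (Suc n)) \<le> real n + 2"
    using assms(3,6) n unfolding small_def big_def by (auto dest!: spec[of _ "Suc n"] simp: add_ac)
  have B: "cmod (b n) \<le> (real n + 2) ^ 2 / real d" "cmod (c n) \<le> real n + 2"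
    using assms(4,5) n unfolding small_def big_def
    by (auto dest!: spec[of _ n] intro: order_trans[OF _ divide_right_mono[OF power_mono]])
  have "cmod (mmul (tri a b) (tri c e) n n) \<le> (real n + 2) ^ 2 / real d * (real n + 2) + (real n + 2) ^ 2 / real d * (real n + 2)"
    using A B by (intro order_trans[OF diag_bound] add_mono mult_mono) auto
  also have "\<dots> = 2 * (real n + 2) ^ 3 / real d"
    by (simp add: field_simps power2_eq_square power3_eq_cube)
  also have "\<dots> \<le> 2 * (real n + 2) ^ 4 / real d"
    using dd by (intro divide_right_mono mult_left_mono power_increasing) auto
  finally show ?thesis .
qed

lemma bs_bound:
  assumes d: "1 \<le> d" and n: "n \<le> d" and "big a" "big b" "small d c" "small d e"
  shows "cmod (mmul (tri a b) (tri c e) n n) \<le> 2 * (real n + 2) ^ 4 / real d"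
proof -
  have dd: "real d \<ge> 1" using d by simp
  have A: "cmod (e (Suc n)) \<le> (real n + 2) ^ 2 / real d" "cmod (a (Suc n)) \<le> real n + 2"
    using assms(3,6) n unfolding small_def big_def by (auto dest!: spec[of _ "Suc n"] simp: add_ac)
  have B: "cmod (c n) \<le> (real n + 2) ^ 2 / real d" "cmod (b n) \<le> real n + 2"
    using assms(4,5) n unfolding small_def big_def
    by (auto dest!: spec[of _ n] intro: order_trans[OF _ divide_right_mono[OF power_mono]])
  have "cmod (mmul (tri a b) (tri c e) n n) \<le> (real n + 2) * ((real n + 2) ^ 2 / real d) + (real n + 2) * ((real n + 2) ^ 2 / real d)"
    using A B by (intro order_trans[OF diag_bound] add_mono mult_mono) auto
  also have "\<dots> = 2 * (real n + 2) ^ 3 / real d"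
    by (simp add: field_simps power2_eq_square power3_eq_cube)
  also have "\<dots> \<le> 2 * (real n + 2) ^ 4 / real d"
    using dd by (intro divide_right_mono mult_left_mono power_increasing) auto
  finally show ?thesis .
qed

lemma jordan_bound:
  assumes "1 \<le> d" "n \<le> d" "small d a" "small d b" "big c" "big e"
  shows "cmod (jordan (tri a b) (tri c e) n n) \<le> 2 * (real n + 2) ^ 4 / real d"
proof -
  have "cmod (jordan (tri a b) (tri c e) n n) \<le> (cmod (mmul (tri a b) (tri c e) n n) + cmod (mmul (tri c e) (tri a b) n n)) / 2"
    unfolding jordan_def by (simp add: norm_divide divide_right_mono norm_triangle_ineq)
  also have "\<dots> \<le> (2 * (real n + 2) ^ 4 / real d + 2 * (real n + 2) ^ 4 / real d) / 2"
    using sb_bound[OF assms] bs_bound[OF assms(1,2,5,6,3,4)] by (intro divide_right_mono add_mono) auto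
  finally show ?thesis by simp
qed

lemma cmod_scale: assumes "cmod c \<le> 1" "\<bar>x\<bar> \<le> B"
  shows "cmod (c * complex_of_real x) \<le> B"
proof -
  have "cmod (c * complex_of_real x) = cmod c * \<bar>x\<bar>" by (simp add: norm_mult)
  also have "\<dots> \<le> \<bar>x\<bar>" by (rule mult_left_le_one_le[OF abs_ge_zero norm_ge_zero assms(1)])
  finally show ?thesis using assms(2) by linarith
qed

lemma small_dl: assumes "1 \<le> d" "cmod c \<le> 1"
  shows "small d (\<lambda>n. c * complex_of_real (dl d n))"
  unfolding small_def
proof (intro allI impI)
  fix m assume "m \<le> d + 1"
  then have "\<bar>dl d m\<bar> \<le> (real m + 1) ^ 2 / real d" using dl_bound assms by blast
  then show "cmod (c * complex_of_real (dl d m)) \<le> (real m + 1) ^ 2 / real d"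
    by (rule cmod_scale[OF assms(2)])
qed

lemma small_dl1: assumes "1 \<le> d" shows "small d (\<lambda>n. complex_of_real (dl d n))"
  using small_dl[OF assms, of 1] by simp

lemma big_s: assumes "cmod c \<le> 1" shows "big (\<lambda>n. c * complex_of_real (sqrt (real n) / sqrt 2))"
  unfolding big_def
proof
  fix m
  have "sqrt (real m) \<le> sqrt (real m) * sqrt 2"
    using mult_left_mono[of 1 "sqrt 2" "sqrt (real m)"] by simp
  then have "sqrt (real m) / sqrt 2 \<le> sqrt (real m)" 
    by (subst pos_divide_le_eq) auto
  also have "\<dots> \<le> real m + 1" using sqrt_le_self_nat[of m] by simp
  finally have "\<bar>sqrt (real m) / sqrt 2\<bar> \<le> real m + 1" by simp
  then show "cmod (c * complex_of_real (sqrt (real m) / sqrt 2)) \<le> real m + 1"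
    by (rule cmod_scale[OF assms])
qed

lemma Qop_tri: "Qop = tri (\<lambda>n. 1 * complex_of_real (sqrt (real n) / sqrt 2)) (\<lambda>n. 1 * complex_of_real (sqrt (real n) / sqrt 2))"
  by (simp add: Qop_def ann_tri cre_tri tri_madd tri_smul)

lemma Pop_tri: "Pop = tri (\<lambda>n. (-\<i>) * complex_of_real (sqrt (real n) / sqrt 2)) (\<lambda>n. \<i> * complex_of_real (sqrt (real n) / sqrt 2))"
  unfolding Pop_def ann_tri cre_tri tri_msub tri_smul
  by (rule arg_cong2[where f = tri]) (auto simp: fun_eq_iff field_simps)

lemma X3a: "msub ann (smul (1 / complex_of_real (sqrt (real d))) (Wconj d (Jplus d))) = tri (\<lambda>n. complex_of_real (dl d n)) (\<lambda>_. 0)"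
  unfolding ann_tri Jplus_tri tri_msub tri_smul
  by (rule arg_cong2[where f = tri]) (auto simp: fun_eq_iff dl_def)

lemma X3b: "msub cre (smul (1 / complex_of_real (sqrt (real d))) (Wconj d (Jminus d))) = tri (\<lambda>_. 0) (\<lambda>n. complex_of_real (dl d n))"
  unfolding cre_tri Jminus_tri tri_msub tri_smul
  by (rule arg_cong2[where f = tri]) (auto simp: fun_eq_iff dl_def)

lemma real_id: assumes "1 \<le> d"
  shows "sqrt (real n) / sqrt 2 - 1 / sqrt (real d / 2) * (al d n / 2) = dl d n / sqrt 2"
proof -
  have t: "sqrt (real d) > 0" using assms by simp
  have "1 / sqrt (real d / 2) = sqrt 2 / sqrt (real d)" by (simp add: real_sqrt_divide)
  have h2: "sqrt 2 / 2 = 1 / sqrt (2::real)" by (simp add: field_simps)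
  have "1 / sqrt (real d / 2) * (al d n / 2) = al d n / sqrt (real d) * (sqrt 2 / 2)"
    using \<open>1 / sqrt (real d / 2) = sqrt 2 / sqrt (real d)\<close> by simp
  also have "\<dots> = al d n / sqrt (real d) / sqrt 2" by (simp only: h2) simp
  finally show ?thesis by (simp add: dl_def diff_divide_distrib)
qed

lemma hQ: assumes "1 \<le> d"
  shows "complex_of_real (sqrt (real n) / sqrt 2) - 1 / complex_of_real (sqrt (real d / 2)) * (complex_of_real (al d n) / 2)
     = complex_of_real (dl d n / sqrt 2)"
proof -
  have "complex_of_real (sqrt (real n) / sqrt 2) - 1 / complex_of_real (sqrt (real d / 2)) * (complex_of_real (al d n) / 2)
     = complex_of_real (sqrt (real n) / sqrt 2 - 1 / sqrt (real d / 2) * (al d n / 2))"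
    by simp
  then show ?thesis by (simp only: real_id[OF assms])
qed

lemma X4Q: assumes "1 \<le> d"
  shows "msub Qop (smul (1 / complex_of_real (sqrt (real d / 2))) (Wconj d (J1 d))) = tri (\<lambda>n. 1 * complex_of_real (dl d n / sqrt 2)) (\<lambda>n. 1 * complex_of_real (dl d n / sqrt 2))"
proof -
  have h: "\<And>n. 1 * complex_of_real (sqrt (real n) / sqrt 2) - 1 / complex_of_real (sqrt (real d / 2)) * (complex_of_real (al d n) / 2)
     = 1 * complex_of_real (dl d n / sqrt 2)" using hQ[OF assms] by simp
  show ?thesis unfolding Qop_tri J1_tri tri_msub tri_smul h ..
qed



lemma hP1: assumes "1 \<le> d"
  shows "(-\<i>) * complex_of_real (sqrt (real n) / sqrt 2) - 1 / complex_of_real (sqrt (real d / 2)) * (- (\<i> * complex_of_real (al d n) / 2))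
     = (- \<i> / complex_of_real (sqrt 2)) * complex_of_real (dl d n)"
proof -
  have "(-\<i>) * complex_of_real (sqrt (real n) / sqrt 2) - 1 / complex_of_real (sqrt (real d / 2)) * (- (\<i> * complex_of_real (al d n) / 2))
     = (-\<i>) * (complex_of_real (sqrt (real n) / sqrt 2) - 1 / complex_of_real (sqrt (real d / 2)) * (complex_of_real (al d n) / 2))"
    by (simp add: algebra_simps)
  also have "\<dots> = (-\<i>) * complex_of_real (dl d n / sqrt 2)" by (simp only: hQ[OF assms])
  finally show ?thesis by simp
qed

lemma hP2: assumes "1 \<le> d"
  shows "\<i> * complex_of_real (sqrt (real n) / sqrt 2) - 1 / complex_of_real (sqrt (real d / 2)) * (\<i> * complex_of_real (al d n) / 2)
     = (\<i> / complex_of_real (sqrt 2)) * complex_of_real (dl d n)"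
proof -
  have "\<i> * complex_of_real (sqrt (real n) / sqrt 2) - 1 / complex_of_real (sqrt (real d / 2)) * (\<i> * complex_of_real (al d n) / 2)
     = \<i> * (complex_of_real (sqrt (real n) / sqrt 2) - 1 / complex_of_real (sqrt (real d / 2)) * (complex_of_real (al d n) / 2))"
    by (simp add: algebra_simps)
  also have "\<dots> = \<i> * complex_of_real (dl d n / sqrt 2)" by (simp only: hQ[OF assms])
  finally show ?thesis by simp
qed

lemma hQ': assumes "1 \<le> d"
  shows "1 * complex_of_real (sqrt (real n) / sqrt 2) - 1 / complex_of_real (sqrt (real d / 2)) * (complex_of_real (al d n) / 2)
     = (1 / complex_of_real (sqrt 2)) * complex_of_real (dl d n)"
  using hQ[OF assms, of n] by simp

lemma X4Q': assumes "1 \<le> d"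
  shows "msub Qop (smul (1 / complex_of_real (sqrt (real d / 2))) (Wconj d (J1 d))) = tri (\<lambda>n. (1 / complex_of_real (sqrt 2)) * complex_of_real (dl d n)) (\<lambda>n. (1 / complex_of_real (sqrt 2)) * complex_of_real (dl d n))"
  unfolding Qop_tri J1_tri tri_msub tri_smul hQ'[OF assms] ..

lemma X4P: assumes "1 \<le> d"
  shows "msub Pop (smul (1 / complex_of_real (sqrt (real d / 2))) (Wconj d (J2 d))) = tri (\<lambda>n. (- \<i> / complex_of_real (sqrt 2)) * complex_of_real (dl d n)) (\<lambda>n. (\<i> / complex_of_real (sqrt 2)) * complex_of_real (dl d n))"
  unfolding Pop_tri J2_tri tri_msub tri_smul hP1[OF assms] hP2[OF assms] ..

lemma c1: "cmod (1 / complex_of_real (sqrt 2)) \<le> 1" "cmod (- \<i> / complex_of_real (sqrt 2)) \<le> 1"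
  "cmod (\<i> / complex_of_real (sqrt 2)) \<le> 1" "cmod (1::complex) \<le> 1" "cmod (- \<i>) \<le> 1" "cmod \<i> \<le> 1"
  by (simp_all add: norm_divide)

lemma part3a: assumes "0 < p" "p < 1"
  shows "(\<lambda>d. Tr (mmul (Wconj d (rho_spin d p))
        (mmul (adj (msub ann (smul (1 / complex_of_real (sqrt (real d))) (Wconj d (Jplus d)))))
              (msub ann (smul (1 / complex_of_real (sqrt (real d))) (Wconj d (Jplus d))))))) \<longlonglongrightarrow> 0"
proof (rule vanish[OF assms, of 2])
  fix d n :: nat assume d: "1 \<le> d" and n: "n \<le> d"
  have "adj (msub ann (smul (1 / complex_of_real (sqrt (real d))) (Wconj d (Jplus d)))) = tri (\<lambda>_. 0) (\<lambda>n. complex_of_real (dl d n))"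
    by (simp add: X3a tri_adj)
  then show "cmod (mmul (adj (msub ann (smul (1 / complex_of_real (sqrt (real d))) (Wconj d (Jplus d)))))
              (msub ann (smul (1 / complex_of_real (sqrt (real d))) (Wconj d (Jplus d)))) n n) \<le> 2 * (real n + 2) ^ 4 / real d"
    by (simp only: X3a) (rule ss_bound[OF d n small0 small_dl1[OF d] small_dl1[OF d] small0])
qed simp

lemma part3b: assumes "0 < p" "p < 1"
  shows "(\<lambda>d. Tr (mmul (Wconj d (rho_spin d p))
        (mmul (adj (msub cre (smul (1 / complex_of_real (sqrt (real d))) (Wconj d (Jminus d)))))
              (msub cre (smul (1 / complex_of_real (sqrt (real d))) (Wconj d (Jminus d))))))) \<longlonglongrightarrow> 0"
proof (rule vanish[OF assms, of 2])
  fix d n :: nat assume d: "1 \<le> d" and n: "n \<le> d"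
  have "adj (msub cre (smul (1 / complex_of_real (sqrt (real d))) (Wconj d (Jminus d)))) = tri (\<lambda>n. complex_of_real (dl d n)) (\<lambda>_. 0)"
    by (simp add: X3b tri_adj)
  then show "cmod (mmul (adj (msub cre (smul (1 / complex_of_real (sqrt (real d))) (Wconj d (Jminus d)))))
              (msub cre (smul (1 / complex_of_real (sqrt (real d))) (Wconj d (Jminus d)))) n n) \<le> 2 * (real n + 2) ^ 4 / real d"
    by (simp only: X3b) (rule ss_bound[OF d n small_dl1[OF d] small0 small0 small_dl1[OF d]])
qed simp

lemma part4Q: assumes "0 < p" "p < 1"
  shows "(\<lambda>d. Tr (mmul (Wconj d (rho_spin d p))
        (mmul (msub Qop (smul (1 / complex_of_real (sqrt (real d / 2))) (Wconj d (J1 d))))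
              (msub Qop (smul (1 / complex_of_real (sqrt (real d / 2))) (Wconj d (J1 d))))))) \<longlonglongrightarrow> 0"
proof (rule vanish[OF assms, of 2])
  fix d n :: nat assume d: "1 \<le> d" and n: "n \<le> d"
  show "cmod (mmul (msub Qop (smul (1 / complex_of_real (sqrt (real d / 2))) (Wconj d (J1 d))))
              (msub Qop (smul (1 / complex_of_real (sqrt (real d / 2))) (Wconj d (J1 d)))) n n) \<le> 2 * (real n + 2) ^ 4 / real d"
    unfolding X4Q'[OF d]
    by (rule ss_bound[OF d n]) (rule small_dl[OF d], rule c1)+
qed simp

lemma part4P: assumes "0 < p" "p < 1"
  shows "(\<lambda>d. Tr (mmul (Wconj d (rho_spin d p))
        (mmul (msub Pop (smul (1 / complex_of_real (sqrt (real d / 2))) (Wconj d (J2 d))))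
              (msub Pop (smul (1 / complex_of_real (sqrt (real d / 2))) (Wconj d (J2 d))))))) \<longlonglongrightarrow> 0"
proof (rule vanish[OF assms, of 2])
  fix d n :: nat assume d: "1 \<le> d" and n: "n \<le> d"
  show "cmod (mmul (msub Pop (smul (1 / complex_of_real (sqrt (real d / 2))) (Wconj d (J2 d))))
              (msub Pop (smul (1 / complex_of_real (sqrt (real d / 2))) (Wconj d (J2 d)))) n n) \<le> 2 * (real n + 2) ^ 4 / real d"
    unfolding X4P[OF d]
    by (rule ss_bound[OF d n]) (rule small_dl[OF d], rule c1)+
qed simp

lemma part6: assumes "0 < p" "p < 1" and Y: "Y \<in> {Qop, Pop}"
  shows "(\<lambda>d. Tr (mmul (Wconj d (rho_spin d p))
           (jordan (msub Qop (smul (1 / complex_of_real (sqrt (real d / 2))) (Wconj d (J1 d)))) Y)))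
          \<longlonglongrightarrow> 0
      \<and> (\<lambda>d. Tr (mmul (Wconj d (rho_spin d p))
           (jordan (msub Pop (smul (1 / complex_of_real (sqrt (real d / 2))) (Wconj d (J2 d)))) Y)))
          \<longlonglongrightarrow> 0"
proof -
  obtain c e where Ytri: "Y = tri c e" and bc: "big c" and be: "big e"
  proof (cases "Y = Qop")
    case True then show ?thesis using that[of "\<lambda>n. 1 * complex_of_real (sqrt (real n) / sqrt 2)" "\<lambda>n. 1 * complex_of_real (sqrt (real n) / sqrt 2)"]
      by (simp only: Qop_tri big_s c1)
  next
    case False then have "Y = Pop" using Y by simp
    then show ?thesis using that[of "\<lambda>n. (-\<i>) * complex_of_real (sqrt (real n) / sqrt 2)" "\<lambda>n. \<i> * complex_of_real (sqrt (real n) / sqrt 2)"]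
      by (simp only: Pop_tri big_s c1)
  qed
  show ?thesis
  proof
    show "(\<lambda>d. Tr (mmul (Wconj d (rho_spin d p))
           (jordan (msub Qop (smul (1 / complex_of_real (sqrt (real d / 2))) (Wconj d (J1 d)))) Y)))
          \<longlonglongrightarrow> 0"
    proof (rule vanish[OF assms(1,2), of 2])
      fix d n :: nat assume d: "1 \<le> d" and n: "n \<le> d"
      show "cmod (jordan (msub Qop (smul (1 / complex_of_real (sqrt (real d / 2))) (Wconj d (J1 d)))) Y n n) \<le> 2 * (real n + 2) ^ 4 / real d"
        unfolding X4Q'[OF d] Ytri
        by (rule jordan_bound[OF d n _ _ bc be]) (rule small_dl[OF d], rule c1)+
    qed simp
    show "(\<lambda>d. Tr (mmul (Wconj d (rho_spin d p))
           (jordan (msub Pop (smul (1 / complex_of_real (sqrt (real d / 2))) (Wconj d (J2 d)))) Y)))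
          \<longlonglongrightarrow> 0"
    proof (rule vanish[OF assms(1,2), of 2])
      fix d n :: nat assume d: "1 \<le> d" and n: "n \<le> d"
      show "cmod (jordan (msub Pop (smul (1 / complex_of_real (sqrt (real d / 2))) (Wconj d (J2 d)))) Y n n) \<le> 2 * (real n + 2) ^ 4 / real d"
        unfolding X4P[OF d] Ytri
        by (rule jordan_bound[OF d n _ _ bc be]) (rule small_dl[OF d], rule c1)+
    qed simp
  qed
qed



lemma conv5:
  assumes p: "0 < p" "p < 1" and Yd: "\<And>n. Y n n = complex_of_real (h n)"
    and hb: "\<And>n. \<bar>h n\<bar> \<le> K * (real n + 2) ^ 4"
  shows "(\<lambda>d. Tr (mmul (Wconj d (rho_spin d p)) Y)) \<longlonglongrightarrow> Tr (mmul (rho_th (p / (1 - p))) Y)"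
proof -
  define g where "g n = (1 - p) * p ^ n * h n" for n
  have sm0: "summable (\<lambda>n. p ^ n * (real n + 2) ^ 4)" using summ_poly p by blast
  have gb: "norm (g n) \<le> (K * (1 - p)) * (p ^ n * (real n + 2) ^ 4)" for n
  proof -
    have "norm (g n) = (1 - p) * p ^ n * \<bar>h n\<bar>" using p by (simp add: g_def abs_mult)
    also have "\<dots> \<le> (1 - p) * p ^ n * (K * (real n + 2) ^ 4)"
      using p hb[of n] by (intro mult_left_mono) auto
    finally show ?thesis by (simp add: ac_simps)
  qed
  have smg: "summable (\<lambda>n. norm (g n))"
    by (rule summable_comparison_test'[where N = 0, OF summable_mult[OF sm0]]) (use gb in auto)
  then have smg': "summable g" by (rule summable_norm_cancel)
  have pd: "(\<lambda>d. p ^ Suc d) \<longlonglongrightarrow> 0"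
    using LIMSEQ_Suc[OF LIMSEQ_power_zero[of p]] p by simp
  have "(\<lambda>d. 1 / (1 - p ^ Suc d) * (\<Sum>n\<le>d. g n)) \<longlonglongrightarrow> 1 / (1 - 0) * suminf g"
    by (intro tendsto_intros pd summable_LIMSEQ' smg') simp
  then have L: "(\<lambda>d. complex_of_real (1 / (1 - p ^ Suc d) * (\<Sum>n\<le>d. g n))) \<longlonglongrightarrow> complex_of_real (suminf g)"
    by (intro tendsto_of_real) simp
  have lhs: "Tr (mmul (Wconj d (rho_spin d p)) Y) = complex_of_real (1 / (1 - p ^ Suc d) * (\<Sum>n\<le>d. g n))" for d
    by (simp add: Tr_spin p Yd rc_def g_def sum_distrib_left)
  have N1: "1 / (p / (1 - p) + 1) = 1 - p" "p / (1 - p) / (p / (1 - p) + 1) = p"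
    using p by (simp_all add: field_simps)
  have rhs: "Tr (mmul (rho_th (p / (1 - p))) Y) = infsum (\<lambda>n. complex_of_real (g n)) UNIV"
    unfolding Tr_th N1 by (simp add: Yd g_def)
  have "((\<lambda>n. complex_of_real (g n)) has_sum complex_of_real (suminf g)) UNIV"
    by (rule norm_summable_imp_has_sum) (use smg smg' in \<open>auto intro: sums_of_real summable_sums\<close>)
  then have "Tr (mmul (rho_th (p / (1 - p))) Y) = complex_of_real (suminf g)"
    unfolding rhs by (rule infsumI)
  then show ?thesis unfolding lhs using L by simp
qed

lemma sq_half: "complex_of_real (sqrt (real m) / sqrt 2) * complex_of_real (sqrt (real m) / sqrt 2) = complex_of_real (real m / 2)"
proof -
  have "sqrt (real m) / sqrt 2 * (sqrt (real m) / sqrt 2) = real m / 2" by simp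
  then show ?thesis by (metis of_real_mult)
qed

lemma Q2diag: "mmul Qop Qop n n = complex_of_real (real n + 1 / 2)"
proof -
  have "mmul Qop Qop n n = complex_of_real (real (Suc n) / 2) + (if n = 0 then 0 else complex_of_real (real n / 2))"
    unfolding Qop_tri mmul_tri_diag mult_1 sq_half ..
  also have "\<dots> = complex_of_real (real n + 1 / 2)"
    by (cases n) (simp_all add: field_simps)
  finally show ?thesis .
qed

lemma P2diag: "mmul Pop Pop n n = complex_of_real (real n + 1 / 2)"
proof -
  have e: "(-\<i>) * x * (\<i> * x) = x * x" "\<i> * x * ((-\<i>) * x) = x * x" for x :: complex
    by (simp_all add: algebra_simps)
  have "mmul Pop Pop n n = complex_of_real (real (Suc n) / 2) + (if n = 0 then 0 else complex_of_real (real n / 2))"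
    unfolding Pop_tri mmul_tri_diag e sq_half ..
  also have "\<dots> = complex_of_real (real n + 1 / 2)"
    by (cases n) (simp_all add: field_simps)
  finally show ?thesis .
qed

lemma QPdiag: "jordan Qop Pop n n = complex_of_real 0"
  unfolding jordan_def Qop_tri Pop_tri mmul_tri_diag by (simp add: algebra_simps)

lemma part5: assumes "0 < p" "p < 1"
  shows "(\<lambda>d. Tr (mmul (Wconj d (rho_spin d p)) (mmul Qop Qop)))
        \<longlonglongrightarrow> Tr (mmul (rho_th (p / (1 - p))) (mmul Qop Qop))
  \<and> (\<lambda>d. Tr (mmul (Wconj d (rho_spin d p)) (mmul Pop Pop)))
        \<longlonglongrightarrow> Tr (mmul (rho_th (p / (1 - p))) (mmul Pop Pop))
  \<and> (\<lambda>d. Tr (mmul (Wconj d (rho_spin d p)) (jordan Qop Pop)))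
        \<longlonglongrightarrow> Tr (mmul (rho_th (p / (1 - p))) (jordan Qop Pop))"
proof -
  have hb: "\<bar>real n + 1 / 2\<bar> \<le> 1 * (real n + 2) ^ 4" for n
  proof -
    have "real n + 2 \<le> (real n + 2) ^ 4"
      by (rule order_trans[OF _ power_increasing[of 1 4 "real n + 2"]]) auto
    then show ?thesis by simp
  qed
  show ?thesis
    using conv5[OF assms, where K = 1 and h = "\<lambda>n. real n + 1 / 2" and Y = "mmul Qop Qop", OF Q2diag hb]
      conv5[OF assms, where K = 1 and h = "\<lambda>n. real n + 1 / 2" and Y = "mmul Pop Pop", OF P2diag hb]
      conv5[OF assms, where K = 1 and h = "\<lambda>_. 0" and Y = "jordan Qop Pop", OF QPdiag] by simp
qed



definition ip :: "nat \<Rightarrow> (nat \<Rightarrow> complex) \<Rightarrow> (nat \<Rightarrow> complex) \<Rightarrow> complex" where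
  "ip M x y = (\<Sum>n<M. cnj (x n) * y n)"

lemma ip_lin: "(\<Sum>n<M. cnj (\<Sum>k<K. c k * e k n) * y n) = (\<Sum>k<K. cnj (c k) * ip M (e k) y)"
proof -
  have "(\<Sum>n<M. cnj (\<Sum>k<K. c k * e k n) * y n) = (\<Sum>n<M. \<Sum>k<K. cnj (c k) * (cnj (e k n) * y n))"
    by (simp add: sum_distrib_right mult.assoc)
  also have "\<dots> = (\<Sum>k<K. \<Sum>n<M. cnj (c k) * (cnj (e k n) * y n))" by (rule sum.swap)
  also have "\<dots> = (\<Sum>k<K. cnj (c k) * ip M (e k) y)" by (simp add: ip_def sum_distrib_left)
  finally show ?thesis .
qed

lemma ip_on: assumes "orthonormal_fin M K e" "k < K"
  shows "ip M (e k) (\<lambda>n. \<Sum>l<K. c l * e l n) = c k"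
proof -
  have "ip M (e k) (\<lambda>n. \<Sum>l<K. c l * e l n) = (\<Sum>n<M. \<Sum>l<K. c l * (cnj (e k n) * e l n))"
    by (simp add: ip_def sum_distrib_left mult_ac)
  also have "\<dots> = (\<Sum>l<K. \<Sum>n<M. c l * (cnj (e k n) * e l n))" by (rule sum.swap)
  also have "\<dots> = (\<Sum>l<K. c l * (\<Sum>n<M. cnj (e k n) * e l n))" by (simp add: sum_distrib_left)
  also have "\<dots> = (\<Sum>l<K. if l = k then c k else 0)"
    using assms unfolding orthonormal_fin_def by (intro sum.cong) auto
  also have "\<dots> = c k" using assms(2) by simp
  finally show ?thesis .
qed

lemma cnj_sq: "cnj w * w = complex_of_real ((cmod w)\<^sup>2)"
  by (metis complex_norm_square mult.commute)

lemma bessel: assumes on: "orthonormal_fin M K e"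
  shows "(\<Sum>k<K. (cmod (ip M (e k) x))\<^sup>2) \<le> (\<Sum>n<M. (cmod (x n))\<^sup>2)"
proof -
  define c where "c k = ip M (e k) x" for k
  define s where "s n = (\<Sum>k<K. c k * e k n)" for n
  define A where "A = (\<Sum>k<K. cnj (c k) * c k)"
  have h1: "(\<Sum>n<M. cnj (s n) * x n) = A"
    unfolding s_def ip_lin A_def c_def ..
  have h2: "(\<Sum>n<M. cnj (s n) * s n) = A"
  proof -
    have "(\<Sum>n<M. cnj (s n) * s n) = (\<Sum>k<K. cnj (c k) * ip M (e k) s)"
      unfolding s_def ip_lin ..
    also have "\<dots> = A" unfolding A_def
      by (intro sum.cong refl) (simp add: s_def[abs_def] ip_on[OF on])
    finally show ?thesis .
  qed
  have Areal: "cnj A = A" by (simp add: A_def mult.commute)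
  have h3: "(\<Sum>n<M. cnj (x n) * s n) = A"
  proof -
    have "(\<Sum>n<M. cnj (x n) * s n) = cnj (\<Sum>n<M. cnj (s n) * x n)" by (simp add: mult.commute)
    then show ?thesis using h1 Areal by simp
  qed
  have "(\<Sum>n<M. cnj (x n - s n) * (x n - s n)) =
        (\<Sum>n<M. cnj (x n) * x n) - (\<Sum>n<M. cnj (x n) * s n) - (\<Sum>n<M. cnj (s n) * x n) + (\<Sum>n<M. cnj (s n) * s n)"
  proof -
    have pw: "cnj (x n - s n) * (x n - s n) = cnj (x n) * x n - cnj (x n) * s n - cnj (s n) * x n + cnj (s n) * s n" for n
      by (simp add: algebra_simps)
    show ?thesis by (simp only: pw sum.distrib sum_subtractf)
  qed
  also have "\<dots> = (\<Sum>n<M. cnj (x n) * x n) - A" using h1 h2 h3 by simp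
  finally have "complex_of_real (\<Sum>n<M. (cmod (x n - s n))\<^sup>2) = complex_of_real (\<Sum>n<M. (cmod (x n))\<^sup>2) - complex_of_real (\<Sum>k<K. (cmod (c k))\<^sup>2)"
    unfolding cnj_sq A_def of_real_sum .
  then have "(\<Sum>n<M. (cmod (x n - s n))\<^sup>2) = (\<Sum>n<M. (cmod (x n))\<^sup>2) - (\<Sum>k<K. (cmod (c k))\<^sup>2)"
    by (simp only: of_real_diff[symmetric] of_real_eq_iff)
  moreover have "0 \<le> (\<Sum>n<M. (cmod (x n - s n))\<^sup>2)" by (simp add: sum_nonneg)
  ultimately show ?thesis unfolding c_def by linarith
qed

lemma cs_bessel: assumes "orthonormal_fin M K e" "orthonormal_fin M K f"
  shows "(\<Sum>k<K. cmod (ip M (f k) a) * cmod (ip M (e k) b)) \<le> sqrt ((\<Sum>n<M. (cmod (a n))\<^sup>2) * (\<Sum>n<M. (cmod (b n))\<^sup>2))"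
proof (rule real_le_rsqrt)
  have "(\<Sum>k<K. cmod (ip M (f k) a) * cmod (ip M (e k) b))\<^sup>2 \<le> (\<Sum>k<K. (cmod (ip M (f k) a))\<^sup>2) * (\<Sum>k<K. (cmod (ip M (e k) b))\<^sup>2)"
    by (rule Cauchy_Schwarz_ineq_sum)
  also have "\<dots> \<le> (\<Sum>n<M. (cmod (a n))\<^sup>2) * (\<Sum>n<M. (cmod (b n))\<^sup>2)"
    using bessel[OF assms(2), of a] bessel[OF assms(1), of b]
    by (intro mult_mono) (auto intro: sum_nonneg)
  finally show "(\<Sum>k<K. cmod (ip M (f k) a) * cmod (ip M (e k) b))\<^sup>2 \<le> (\<Sum>n<M. (cmod (a n))\<^sup>2) * (\<Sum>n<M. (cmod (b n))\<^sup>2)" .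
qed

lemma tn_le:
  assumes "\<And>M K e f. orthonormal_fin M K e \<Longrightarrow> orthonormal_fin M K f \<Longrightarrow>
     (\<Sum>k<K. cmod (\<Sum>m<M. \<Sum>n<M. cnj (f k m) * T m n * e k n)) \<le> B"
  shows "trace_norm T \<le> ereal B"
  unfolding trace_norm_def by (rule SUP_least) (auto intro: assms)

lemma tn_ge0: "0 \<le> trace_norm T"
proof -
  have "(0, 0, \<lambda>_ _. 0, \<lambda>_ _. 0) \<in> {(M, K, e, f). orthonormal_fin M K e \<and> orthonormal_fin M K f}"
    by (simp add: orthonormal_fin_def)
  then show ?thesis unfolding trace_norm_def
    by (rule SUP_upper2) (simp add: zero_ereal_def)
qed

lemma tn_tendsto:
  assumes "eventually (\<lambda>d. trace_norm (T d) \<le> ereal (B d)) sequentially" "B \<longlonglongrightarrow> 0"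
  shows "(\<lambda>d. trace_norm (T d)) \<longlonglongrightarrow> 0"
proof (rule tendsto_sandwich[of "\<lambda>_. 0" _ _ "\<lambda>d. ereal (B d)"])
  show "eventually (\<lambda>d. 0 \<le> trace_norm (T d)) sequentially" by (simp add: tn_ge0)
  show "eventually (\<lambda>d. trace_norm (T d) \<le> ereal (B d)) sequentially" by fact
  show "((\<lambda>_. 0::ereal) \<longlongrightarrow> 0) sequentially" by simp
  show "((\<lambda>d. ereal (B d)) \<longlongrightarrow> 0) sequentially" using assms(2) by (simp add: zero_ereal_def)
qed



lemma tn_diag:
  assumes off: "\<And>m n. m \<noteq> n \<Longrightarrow> T m n = 0" and B: "\<And>M. (\<Sum>m<M. cmod (T m m)) \<le> B"
  shows "trace_norm T \<le> ereal B"
proof (rule tn_le)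
  fix M K e f assume oe: "orthonormal_fin M K e" and of: "orthonormal_fin M K f"
  have inner: "(\<Sum>n<M. cnj (f k m) * T m n * e k n) = cnj (f k m) * T m m * e k m" if "m < M" for k m
  proof -
    have "(\<Sum>n<M. cnj (f k m) * T m n * e k n) = (\<Sum>n<M. if n = m then cnj (f k m) * T m m * e k m else 0)"
      by (rule sum.cong) (auto simp: off)
    then show ?thesis using that by simp
  qed
  have col: "(\<Sum>k<K. cmod (f k m) * cmod (e k m)) \<le> 1" if "m < M" for m
  proof -
    define x :: "nat \<Rightarrow> complex" where "x n = (if n = m then 1 else 0)" for n
    have ipx: "ip M (g k) x = cnj (g k m)" for g k
      using that by (simp add: ip_def x_def if_distrib cong: if_cong)
    have "(\<Sum>n<M. (cmod (x n))\<^sup>2) = (\<Sum>n<M. if n = m then 1 else 0)"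
      by (rule sum.cong) (auto simp: x_def)
    then have nx: "(\<Sum>n<M. (cmod (x n))\<^sup>2) = 1" using that by simp
    have "(\<Sum>k<K. cmod (f k m) * cmod (e k m))\<^sup>2 \<le> (\<Sum>k<K. (cmod (f k m))\<^sup>2) * (\<Sum>k<K. (cmod (e k m))\<^sup>2)"
      by (rule Cauchy_Schwarz_ineq_sum)
    also have "\<dots> \<le> 1 * 1"
    proof -
      have b1: "(\<Sum>k<K. (cmod (f k m))\<^sup>2) \<le> 1" using bessel[OF of, of x] unfolding ipx nx by simp
      have b2: "(\<Sum>k<K. (cmod (e k m))\<^sup>2) \<le> 1" using bessel[OF oe, of x] unfolding ipx nx by simp
      show ?thesis by (rule mult_mono[OF b1 b2]) (auto intro: sum_nonneg)
    qed
    finally have "(\<Sum>k<K. cmod (f k m) * cmod (e k m))\<^sup>2 \<le> 1\<^sup>2" by simp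
    then show ?thesis by (rule power2_le_imp_le) simp
  qed
  have in2: "(\<Sum>m<M. \<Sum>n<M. cnj (f k m) * T m n * e k n) = (\<Sum>m<M. cnj (f k m) * T m m * e k m)" for k
    by (rule sum.cong) (simp_all add: inner)
  have nb: "cmod (\<Sum>m<M. cnj (f k m) * T m m * e k m) \<le> (\<Sum>m<M. cmod (T m m) * (cmod (f k m) * cmod (e k m)))" for k
  proof -
    have "cmod (\<Sum>m<M. cnj (f k m) * T m m * e k m) \<le> (\<Sum>m<M. cmod (cnj (f k m) * T m m * e k m))"
      by (rule norm_sum)
    also have "\<dots> = (\<Sum>m<M. cmod (T m m) * (cmod (f k m) * cmod (e k m)))"
      by (rule sum.cong) (simp_all add: norm_mult)
    finally show ?thesis .
  qed
  have "(\<Sum>k<K. cmod (\<Sum>m<M. \<Sum>n<M. cnj (f k m) * T m n * e k n)) = (\<Sum>k<K. cmod (\<Sum>m<M. cnj (f k m) * T m m * e k m))"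
    by (simp only: in2)
  also have "\<dots> \<le> (\<Sum>k<K. \<Sum>m<M. cmod (T m m) * (cmod (f k m) * cmod (e k m)))"
    by (rule sum_mono) (rule nb)
  also have "\<dots> = (\<Sum>m<M. cmod (T m m) * (\<Sum>k<K. cmod (f k m) * cmod (e k m)))"
    unfolding sum_distrib_left by (rule sum.swap)
  also have "\<dots> \<le> (\<Sum>m<M. cmod (T m m) * 1)"
    by (intro sum_mono mult_left_mono col) auto
  also have "\<dots> \<le> B" using B by simp
  finally show "(\<Sum>k<K. cmod (\<Sum>m<M. \<Sum>n<M. cnj (f k m) * T m n * e k n)) \<le> B" .
qed

lemma part1: assumes p: "0 < p" "p < 1"
  shows "(\<lambda>d. trace_norm (msub (Wconj d (rho_spin d p)) (rho_th (p / (1 - p))))) \<longlonglongrightarrow> 0"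
proof (rule tn_tendsto[where B = "\<lambda>d. sqrt p ^ (d + 1) / (1 - sqrt p)"])
  define q where "q = sqrt p"
  have q: "0 < q" "q < 1" "p = q ^ 2" using p by (auto simp: q_def)
  have pk: "p ^ k \<le> q ^ k" for k
  proof -
    have "p ^ k = q ^ (2 * k)" using q by (simp add: power_mult)
    also have "\<dots> \<le> q ^ k" using q by (intro power_decreasing) auto
    finally show ?thesis .
  qed
  have N1: "1 / (p / (1 - p) + 1) = 1 - p" "p / (1 - p) / (p / (1 - p) + 1) = p"
    using p by (simp_all add: field_simps)
  show "(\<lambda>d. sqrt p ^ (d + 1) / (1 - sqrt p)) \<longlonglongrightarrow> 0"
  proof -
    have "(\<lambda>n. q ^ n) \<longlonglongrightarrow> 0" by (rule LIMSEQ_power_zero) (use q in simp)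
    then have "(\<lambda>n. q ^ Suc n) \<longlonglongrightarrow> 0" by (rule LIMSEQ_Suc)
    then have "(\<lambda>n. q ^ Suc n / (1 - q)) \<longlonglongrightarrow> 0" by (rule tendsto_divide_zero)
    then show ?thesis by (simp add: q_def)
  qed
  show "eventually (\<lambda>d. trace_norm (msub (Wconj d (rho_spin d p)) (rho_th (p / (1 - p)))) \<le> ereal (sqrt p ^ (d + 1) / (1 - sqrt p))) sequentially"
  proof (intro always_eventually allI tn_diag)
    fix d m n :: nat
    assume "m \<noteq> n"
    then show "msub (Wconj d (rho_spin d p)) (rho_th (p / (1 - p))) m n = 0"
      by (simp add: msub_def Rspin[OF p(1)] rho_th_def)
  next
    fix d M :: nat
    have diag: "msub (Wconj d (rho_spin d p)) (rho_th (p / (1 - p))) m m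
      = complex_of_real ((if m \<le> d then rc d p m else 0) - (1 - p) * p ^ m)" for m
      unfolding msub_def Rspin[OF p(1)] rho_th_def N1 by simp
    have pb: "p ^ (d + 1) \<le> p" using p by (simp add: power_le_one mult_left_le)
    have bnd: "\<bar>(if m \<le> d then rc d p m else 0) - (1 - p) * p ^ m\<bar> \<le> q ^ (d + 1) * q ^ m" for m
    proof (cases "m \<le> d")
      case True
      have d1: "1 - p ^ (d + 1) > 0" using pb p by linarith
      have e: "(if m \<le> d then rc d p m else 0) - (1 - p) * p ^ m = (1 - p) * p ^ m * p ^ (d + 1) / (1 - p ^ (d + 1))"
        using d1 True by (simp add: rc_def field_simps)
      have nn: "0 \<le> (1 - p) * p ^ m * p ^ (d + 1) / (1 - p ^ (d + 1))"
        using p d1 by simp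
      have "\<bar>(if m \<le> d then rc d p m else 0) - (1 - p) * p ^ m\<bar> = (1 - p) * p ^ m * p ^ (d + 1) / (1 - p ^ (d + 1))"
        unfolding e using nn by (rule abs_of_nonneg)
      also have "\<dots> \<le> p ^ m * p ^ (d + 1)"
      proof -
        have "(1 - p) / (1 - p ^ (d + 1)) \<le> 1" using d1 pb by simp
        then have "(1 - p) / (1 - p ^ (d + 1)) * (p ^ m * p ^ (d + 1)) \<le> 1 * (p ^ m * p ^ (d + 1))"
          using p by (intro mult_right_mono) auto
        then show ?thesis by (simp add: field_simps)
      qed
      also have "p ^ m * p ^ (d + 1) \<le> q ^ (d + 1) * q ^ m"
        using pk[of m] pk[of "d + 1"] p q by (simp add: mult.commute mult_mono)
      finally show ?thesis .
    next
      case False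
      have "\<bar>(if m \<le> d then rc d p m else 0) - (1 - p) * p ^ m\<bar> = (1 - p) * p ^ m"
        using False p by simp
      also have "\<dots> \<le> p ^ m" using p by (simp add: mult_left_le_one_le)
      also have "p ^ m = q ^ m * q ^ m" using q by (simp add: power_mult_distrib[symmetric] power2_eq_square[symmetric] power_mult[symmetric] mult.commute)
      also have "\<dots> \<le> q ^ (d + 1) * q ^ m"
        using False q by (intro mult_right_mono power_decreasing) auto
      finally show ?thesis .
    qed
    have "(\<Sum>m<M. cmod (msub (Wconj d (rho_spin d p)) (rho_th (p / (1 - p))) m m)) \<le> (\<Sum>m<M. q ^ (d + 1) * q ^ m)"
      unfolding diag norm_of_real by (intro sum_mono bnd)
    also have "\<dots> = q ^ (d + 1) * (\<Sum>m<M. q ^ m)"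
      by (simp only: sum_distrib_left)
    also have "\<dots> = q ^ (d + 1) * ((1 - q ^ M) / (1 - q))"
      using q by (simp only: sum_gp_strict) simp
    also have "\<dots> \<le> q ^ (d + 1) * (1 / (1 - q))"
      using q by (intro mult_left_mono divide_right_mono) auto
    finally show "(\<Sum>m<M. cmod (msub (Wconj d (rho_spin d p)) (rho_th (p / (1 - p))) m m)) \<le> sqrt p ^ (d + 1) / (1 - sqrt p)"
      by (simp add: q_def)
  qed
qed



lemma sq_diff_bound: "(cmod (x - y))\<^sup>2 \<le> 2 * (cmod x)\<^sup>2 + 2 * (cmod y)\<^sup>2"
proof -
  have "cmod (x - y) \<le> cmod x + cmod y" by (rule norm_triangle_ineq4)
  then have "(cmod (x - y))\<^sup>2 \<le> (cmod x + cmod y)\<^sup>2" by (intro power_mono) auto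
  also have "\<dots> \<le> 2 * (cmod x)\<^sup>2 + 2 * (cmod y)\<^sup>2"
    using sum_squares_ge_zero[of "cmod x - cmod y" 0] by (simp add: power2_eq_square algebra_simps)
  finally show ?thesis .
qed

lemma summable_diff_sq:
  assumes "summable (\<lambda>n. (cmod (u n))\<^sup>2)" "summable (\<lambda>n. (cmod (v n))\<^sup>2)"
  shows "summable (\<lambda>n. (cmod (u n - v n))\<^sup>2)"
  by (rule summable_comparison_test'[where N = 0, OF summable_add[OF summable_mult[OF assms(1), of 2] summable_mult[OF assms(2), of 2]]])
     (simp add: sq_diff_bound)

lemma ip_swap: "cmod (ip M u e) = cmod (ip M e u)"
proof -
  have "ip M u e = cnj (ip M e u)" by (simp add: ip_def mult.commute)
  then show ?thesis by simp
qed

lemma tn_proj: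
  assumes su: "summable (\<lambda>n. (cmod (u n))\<^sup>2)" and sv: "summable (\<lambda>n. (cmod (v n))\<^sup>2)"
  shows "trace_norm (msub (proj u) (proj v)) \<le> ereal (sqrt ((\<Sum>n. (cmod (u n - v n))\<^sup>2) * (\<Sum>n. (cmod (u n))\<^sup>2))
           + sqrt ((\<Sum>n. (cmod (v n))\<^sup>2) * (\<Sum>n. (cmod (u n - v n))\<^sup>2)))"
proof (rule tn_le)
  fix M K e f assume oe: "orthonormal_fin M K e" and of: "orthonormal_fin M K f"
  define w where "w n = u n - v n" for n
  have sw: "summable (\<lambda>n. (cmod (w n))\<^sup>2)" unfolding w_def by (rule summable_diff_sq[OF su sv])
  have le: "(\<Sum>n<M. (cmod (x n))\<^sup>2) \<le> (\<Sum>n. (cmod (x n))\<^sup>2)" if "summable (\<lambda>n. (cmod (x n))\<^sup>2)" for x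
    by (rule sum_le_suminf[OF that]) auto
  have nn: "0 \<le> (\<Sum>n. (cmod (x n))\<^sup>2)" if "summable (\<lambda>n. (cmod (x n))\<^sup>2)" for x
    by (rule suminf_nonneg[OF that]) simp
  have ent: "msub (proj u) (proj v) m n = w m * cnj (u n) + v m * cnj (w n)" for m n
    by (simp add: msub_def proj_def w_def algebra_simps)
  have inner: "(\<Sum>m<M. \<Sum>n<M. cnj (f k m) * msub (proj u) (proj v) m n * e k n)
      = ip M (f k) w * ip M u (e k) + ip M (f k) v * ip M w (e k)" for k
  proof -
    have "(\<Sum>m<M. \<Sum>n<M. cnj (f k m) * msub (proj u) (proj v) m n * e k n)
      = (\<Sum>m<M. \<Sum>n<M. (cnj (f k m) * w m) * (cnj (u n) * e k n) + (cnj (f k m) * v m) * (cnj (w n) * e k n))"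
      unfolding ent by (simp add: algebra_simps)
    also have "\<dots> = ip M (f k) w * ip M u (e k) + ip M (f k) v * ip M w (e k)"
      unfolding ip_def sum_product sum.distrib ..
    finally show ?thesis .
  qed
  have "(\<Sum>k<K. cmod (\<Sum>m<M. \<Sum>n<M. cnj (f k m) * msub (proj u) (proj v) m n * e k n))
     \<le> (\<Sum>k<K. cmod (ip M (f k) w) * cmod (ip M (e k) u) + cmod (ip M (f k) v) * cmod (ip M (e k) w))"
    unfolding inner by (intro sum_mono order_trans[OF norm_triangle_ineq]) (simp add: norm_mult ip_swap)
  also have "\<dots> = (\<Sum>k<K. cmod (ip M (f k) w) * cmod (ip M (e k) u)) + (\<Sum>k<K. cmod (ip M (f k) v) * cmod (ip M (e k) w))"
    by (rule sum.distrib)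
  also have "\<dots> \<le> sqrt ((\<Sum>n<M. (cmod (w n))\<^sup>2) * (\<Sum>n<M. (cmod (u n))\<^sup>2)) + sqrt ((\<Sum>n<M. (cmod (v n))\<^sup>2) * (\<Sum>n<M. (cmod (w n))\<^sup>2))"
    by (intro add_mono cs_bessel[OF oe of])
  also have "\<dots> \<le> sqrt ((\<Sum>n. (cmod (w n))\<^sup>2) * (\<Sum>n. (cmod (u n))\<^sup>2)) + sqrt ((\<Sum>n. (cmod (v n))\<^sup>2) * (\<Sum>n. (cmod (w n))\<^sup>2))"
    using le[OF sw] le[OF su] le[OF sv] nn[OF sw] nn[OF sv]
    by (intro add_mono real_sqrt_le_mono mult_mono) (auto intro: sum_nonneg)
  finally show "(\<Sum>k<K. cmod (\<Sum>m<M. \<Sum>n<M. cnj (f k m) * msub (proj u) (proj v) m n * e k n))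
     \<le> sqrt ((\<Sum>n. (cmod (u n - v n))\<^sup>2) * (\<Sum>n. (cmod (u n))\<^sup>2)) + sqrt ((\<Sum>n. (cmod (v n))\<^sup>2) * (\<Sum>n. (cmod (u n - v n))\<^sup>2))"
    by (simp add: w_def)
qed



lemma l2_conv:
  fixes u :: "nat \<Rightarrow> nat \<Rightarrow> complex" and v :: "nat \<Rightarrow> complex"
  assumes pw: "\<And>n. (\<lambda>d. u d n) \<longlonglongrightarrow> v n"
    and su: "\<And>d. summable (\<lambda>n. (cmod (u d n))\<^sup>2)"
    and U1: "eventually (\<lambda>d. (\<Sum>n. (cmod (u d n))\<^sup>2) \<le> 1) sequentially"
    and V1: "(\<lambda>n. (cmod (v n))\<^sup>2) sums 1"
  shows "(\<lambda>d. \<Sum>n. (cmod (u d n - v n))\<^sup>2) \<longlonglongrightarrow> 0"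
proof (rule order_tendstoI)
  have sv: "summable (\<lambda>n. (cmod (v n))\<^sup>2)" using V1 by (rule sums_summable)
  have sw: "summable (\<lambda>n. (cmod (u d n - v n))\<^sup>2)" for d by (rule summable_diff_sq[OF su sv])
  have S0: "0 \<le> (\<Sum>n. (cmod (u d n - v n))\<^sup>2)" for d by (rule suminf_nonneg[OF sw]) simp
  fix a :: real
  assume "a < 0"
  then show "eventually (\<lambda>d. a < (\<Sum>n. (cmod (u d n - v n))\<^sup>2)) sequentially"
    using S0 by (intro always_eventually allI) (rule less_le_trans[OF _ S0])
next
  have sv: "summable (\<lambda>n. (cmod (v n))\<^sup>2)" using V1 by (rule sums_summable)
  have sw: "summable (\<lambda>n. (cmod (u d n - v n))\<^sup>2)" for d by (rule summable_diff_sq[OF su sv])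
  fix \<epsilon> :: real assume eps: "0 < \<epsilon>"
  have "(\<lambda>N. \<Sum>n<N. (cmod (v n))\<^sup>2) \<longlonglongrightarrow> 1" using V1 by (simp add: sums_def)
  then have "eventually (\<lambda>N. 1 - \<epsilon> / 8 < (\<Sum>n<N. (cmod (v n))\<^sup>2)) sequentially"
    using eps by (intro order_tendstoD) auto
  then obtain N where N: "1 - \<epsilon> / 8 < (\<Sum>n<N. (cmod (v n))\<^sup>2)"
    by (auto simp: eventually_sequentially)
  define T where "T = 1 - (\<Sum>n<N. (cmod (v n))\<^sup>2)"
  have T: "T < \<epsilon> / 8" using N by (simp add: T_def)
  define R where "R d = (\<Sum>n<N. (cmod (u d n - v n))\<^sup>2) + 2 * (1 - (\<Sum>n<N. (cmod (u d n))\<^sup>2)) + 2 * T" for d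
  have "R \<longlonglongrightarrow> (\<Sum>n<N. (cmod (v n - v n))\<^sup>2) + 2 * (1 - (\<Sum>n<N. (cmod (v n))\<^sup>2)) + 2 * T"
    unfolding R_def by (intro tendsto_intros pw)
  then have RL: "R \<longlonglongrightarrow> 4 * T" by (simp add: T_def)
  have "eventually (\<lambda>d. R d < \<epsilon>) sequentially"
    using T eps by (intro order_tendstoD(2)[OF RL]) linarith
  moreover have "eventually (\<lambda>d. (\<Sum>n. (cmod (u d n - v n))\<^sup>2) \<le> R d) sequentially"
    using U1
  proof eventually_elim
    case (elim d)
    have "(\<Sum>n. (cmod (u d n - v n))\<^sup>2) = (\<Sum>n. (cmod (u d (n + N) - v (n + N)))\<^sup>2) + (\<Sum>n<N. (cmod (u d n - v n))\<^sup>2)"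
      by (rule suminf_split_initial_segment[OF sw])
    also have "(\<Sum>n. (cmod (u d (n + N) - v (n + N)))\<^sup>2) \<le> (\<Sum>n. 2 * (cmod (u d (n + N)))\<^sup>2 + 2 * (cmod (v (n + N)))\<^sup>2)"
      using summable_ignore_initial_segment[OF sw[of d], of N] 
        summable_ignore_initial_segment[OF su[of d], of N] summable_ignore_initial_segment[OF sv, of N]
      by (intro suminf_le sq_diff_bound summable_add summable_mult) auto
    also have "\<dots> = 2 * (\<Sum>n. (cmod (u d (n + N)))\<^sup>2) + 2 * (\<Sum>n. (cmod (v (n + N)))\<^sup>2)"
      using summable_ignore_initial_segment[OF su[of d], of N] summable_ignore_initial_segment[OF sv, of N]
      by (subst suminf_add[symmetric]) (auto intro: summable_mult simp: suminf_mult)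
    also have "(\<Sum>n. (cmod (u d (n + N)))\<^sup>2) = (\<Sum>n. (cmod (u d n))\<^sup>2) - (\<Sum>n<N. (cmod (u d n))\<^sup>2)"
      using suminf_split_initial_segment[OF su, of d N] by simp
    also have "(\<Sum>n. (cmod (v (n + N)))\<^sup>2) = T"
      using suminf_split_initial_segment[OF sv, of N] V1 by (simp add: T_def sums_iff)
    finally show ?case using elim by (simp add: R_def)
  qed
  ultimately show "eventually (\<lambda>d. (\<Sum>n. (cmod (u d n - v n))\<^sup>2) < \<epsilon>) sequentially"
    by eventually_elim simp
qed



lemma u_form:
  assumes d: "1 \<le> d" and n: "n \<le> d"
  shows "tvec d (spin_coh d (z / complex_of_real (sqrt (real d)))) n
    = complex_of_real (sqrt (real (d choose n))) * (z / complex_of_real (sqrt (real d))) ^ n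
      * complex_of_real (sqrt (1 - (cmod z)\<^sup>2 / real d) ^ (d - n))"
proof -
  have f1: "real d / 2 + (real d / 2 - real n) = real (d - n)" using n by (simp add: of_nat_diff)
  have f2: "real d / 2 - (real d / 2 - real n) = real n" by simp
  have f3: "(cmod (z / complex_of_real (sqrt (real d))))\<^sup>2 = (cmod z)\<^sup>2 / real d"
    using d by (simp add: norm_divide power_divide)
  have f4: "d choose (d - n) = d choose n" using binomial_symmetric[OF n] by simp
  have f5: "nat \<lfloor>real d - real n\<rfloor> = d - n"
  proof -
    have "real d - real n = real (d - n)" using n by (simp add: of_nat_diff)
    then show ?thesis by (simp only: floor_of_nat nat_int)
  qed
  show ?thesis
    unfolding tvec_def spin_coh_def Let_def f1 f2 f3 using n by (simp add: f4 f5)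
qed

lemma u_sq:
  assumes d: "1 \<le> d" and n: "n \<le> d" and ad: "(cmod z)\<^sup>2 \<le> real d"
  shows "(cmod (tvec d (spin_coh d (z / complex_of_real (sqrt (real d)))) n))\<^sup>2
    = real (d choose n) * ((cmod z)\<^sup>2 / real d) ^ n * (1 - (cmod z)\<^sup>2 / real d) ^ (d - n)"
proof -
  define x where "x = 1 - (cmod z)\<^sup>2 / real d"
  have x0: "0 \<le> x" using ad d by (simp add: x_def field_simps)
  have "cmod (tvec d (spin_coh d (z / complex_of_real (sqrt (real d)))) n)
      = sqrt (real (d choose n)) * (cmod z / sqrt (real d)) ^ n * sqrt x ^ (d - n)"
    unfolding u_form[OF d n] x_def[symmetric] using x0
    by (simp add: norm_mult norm_power norm_divide)
  then have "(cmod (tvec d (spin_coh d (z / complex_of_real (sqrt (real d)))) n))\<^sup>2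
      = (sqrt (real (d choose n)))\<^sup>2 * ((cmod z / sqrt (real d))\<^sup>2) ^ n * ((sqrt x)\<^sup>2) ^ (d - n)"
    by (simp add: power_mult_distrib power_mult[symmetric] mult.commute)
  also have "\<dots> = real (d choose n) * ((cmod z)\<^sup>2 / real d) ^ n * x ^ (d - n)"
    using x0 d by (simp add: power_divide)
  finally show ?thesis by (simp add: x_def)
qed

lemma u_zero: "n > d \<Longrightarrow> tvec d v n = 0"
  by (simp add: tvec_def)

lemma u_summable: "summable (\<lambda>n. (cmod (tvec d v n))\<^sup>2)"
  by (rule summable_finite[of "{..d}"]) (auto simp: tvec_def)

lemma u_norm1:
  assumes d: "1 \<le> d" and ad: "(cmod z)\<^sup>2 \<le> real d"
  shows "(\<Sum>n. (cmod (tvec d (spin_coh d (z / complex_of_real (sqrt (real d)))) n))\<^sup>2) = 1"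
proof -
  have "(\<Sum>n. (cmod (tvec d (spin_coh d (z / complex_of_real (sqrt (real d)))) n))\<^sup>2)
     = (\<Sum>n\<le>d. (cmod (tvec d (spin_coh d (z / complex_of_real (sqrt (real d)))) n))\<^sup>2)"
    by (rule suminf_finite) (auto simp: tvec_def)
  also have "\<dots> = (\<Sum>n\<le>d. real (d choose n) * ((cmod z)\<^sup>2 / real d) ^ n * (1 - (cmod z)\<^sup>2 / real d) ^ (d - n))"
    by (rule sum.cong) (auto simp: u_sq[OF d _ ad])
  also have "\<dots> = ((cmod z)\<^sup>2 / real d + (1 - (cmod z)\<^sup>2 / real d)) ^ d"
    by (rule binomial_ring[symmetric])
  also have "\<dots> = 1" by simp
  finally show ?thesis .
qed

lemma coh_sq: "(cmod (coh z n))\<^sup>2 = exp (- (cmod z)\<^sup>2) * ((cmod z)\<^sup>2) ^ n / fact n"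
proof -
  have "cmod (coh z n) = exp (- (cmod z)\<^sup>2 / 2) * cmod z ^ n / sqrt (fact n)"
    by (simp add: coh_def norm_mult norm_divide norm_power)
  then have "(cmod (coh z n))\<^sup>2 = (exp (- (cmod z)\<^sup>2 / 2))\<^sup>2 * ((cmod z)\<^sup>2) ^ n / (sqrt (fact n))\<^sup>2"
    by (simp add: power_divide power_mult_distrib power_mult[symmetric] mult.commute)
  also have "(exp (- (cmod z)\<^sup>2 / 2))\<^sup>2 = exp (- (cmod z)\<^sup>2)"
    by (simp add: power2_eq_square exp_add[symmetric])
  finally show ?thesis by simp
qed

lemma coh_sums: "(\<lambda>n. (cmod (coh z n))\<^sup>2) sums 1"
proof -
  have "(\<lambda>n. ((cmod z)\<^sup>2) ^ n /\<^sub>R fact n) sums exp ((cmod z)\<^sup>2)" by (rule exp_converges)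
  then have "(\<lambda>n. exp (- (cmod z)\<^sup>2) * (((cmod z)\<^sup>2) ^ n /\<^sub>R fact n)) sums (exp (- (cmod z)\<^sup>2) * exp ((cmod z)\<^sup>2))"
    by (rule sums_mult)
  then show ?thesis unfolding coh_sq by (simp add: exp_add[symmetric] divide_inverse mult_ac)
qed



lemma binom_lim: "(\<lambda>d. real (d choose n) / real d ^ n) \<longlonglongrightarrow> 1 / fact n"
proof -
  have "(\<lambda>d. (\<Prod>i<n. 1 - real i / real d) / fact n) \<longlonglongrightarrow> (\<Prod>i<n. 1 - 0) / fact n"
    by (intro tendsto_intros) auto
  then have L: "(\<lambda>d. (\<Prod>i<n. 1 - real i / real d) / fact n) \<longlonglongrightarrow> 1 / fact n" by simp
  show ?thesis
  proof (rule Lim_transform_eventually[OF L])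
    show "eventually (\<lambda>d. (\<Prod>i<n. 1 - real i / real d) / fact n = real (d choose n) / real d ^ n) sequentially"
      unfolding eventually_sequentially
    proof (intro exI allI impI)
      fix d :: nat assume d: "1 \<le> d"
      have "real (d choose n) = (\<Prod>i<n. real d - real i) / fact n"
        by (simp add: binomial_gbinomial gbinomial_prod_rev atLeast0LessThan)
      moreover have "(\<Prod>i<n. real d - real i) / real d ^ n = (\<Prod>i<n. 1 - real i / real d)"
      proof -
        have "(\<Prod>i<n. 1 - real i / real d) = (\<Prod>i<n. (real d - real i) / real d)"
          using d by (intro prod.cong refl) (simp add: field_simps)
        also have "\<dots> = (\<Prod>i<n. real d - real i) / real d ^ n"
          by (simp add: prod_dividef)
        finally show ?thesis by simp
      qed
      ultimately show "(\<Prod>i<n. 1 - real i / real d) / fact n = real (d choose n) / real d ^ n"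
        by (metis divide_divide_eq_left mult.commute)
    qed
  qed
qed

lemma sqrt_exp: "sqrt (exp x) = exp (x / 2)"
proof -
  have "exp x = (exp (x / 2))\<^sup>2" by (simp add: power2_eq_square exp_add[symmetric])
  then show ?thesis by simp
qed

lemma exp_lim:
  fixes a :: real assumes a: "0 \<le> a"
  shows "(\<lambda>d. sqrt (1 - a / real d) ^ (d - n)) \<longlonglongrightarrow> exp (- a / 2)"
proof -
  have e1: "(\<lambda>d. (1 + (- a) / real d) ^ d) \<longlonglongrightarrow> exp (- a)" by (rule tendsto_exp_limit_sequentially)
  have e2: "(\<lambda>d. sqrt ((1 + (- a) / real d) ^ d)) \<longlonglongrightarrow> sqrt (exp (- a))"
    by (rule tendsto_real_sqrt[OF e1])
  have e3: "(\<lambda>d. sqrt (1 - a / real d) ^ n) \<longlonglongrightarrow> sqrt (1 - 0) ^ n"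
    by (intro tendsto_intros)
  have L: "(\<lambda>d. sqrt ((1 + (- a) / real d) ^ d) / sqrt (1 - a / real d) ^ n) \<longlonglongrightarrow> sqrt (exp (- a)) / sqrt (1 - 0) ^ n"
    by (intro tendsto_divide e2 e3) simp
  show ?thesis
  proof (rule Lim_transform_eventually)
    show "(\<lambda>d. sqrt ((1 + (- a) / real d) ^ d) / sqrt (1 - a / real d) ^ n) \<longlonglongrightarrow> exp (- a / 2)"
      using L by (simp add: sqrt_exp)
    obtain D :: nat where D: "a + 1 \<le> real D" using real_arch_simple by blast
    show "eventually (\<lambda>d. sqrt ((1 + (- a) / real d) ^ d) / sqrt (1 - a / real d) ^ n = sqrt (1 - a / real d) ^ (d - n)) sequentially"
      unfolding eventually_sequentially
    proof (intro exI[of _ "max D n"] allI impI)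
      fix d assume dd: "max D n \<le> d"
      then have "real D \<le> real d" by simp
      then have dpos: "real d > a" "real d > 0" using D a by linarith+
      then have pos: "1 - a / real d > 0" by (simp add: field_simps)
      have "sqrt ((1 + (- a) / real d) ^ d) = sqrt (1 - a / real d) ^ d"
        by (simp add: real_sqrt_power)
      moreover have "sqrt (1 - a / real d) ^ (d - n) = sqrt (1 - a / real d) ^ d / sqrt (1 - a / real d) ^ n"
        using pos dd by (intro power_diff) auto
      ultimately show "sqrt ((1 + (- a) / real d) ^ d) / sqrt (1 - a / real d) ^ n = sqrt (1 - a / real d) ^ (d - n)"
        by simp
    qed
  qed
qed

lemma u_pw: "(\<lambda>d. tvec d (spin_coh d (z / complex_of_real (sqrt (real d)))) n) \<longlonglongrightarrow> coh z n"
proof -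
  define a where "a = (cmod z)\<^sup>2"
  have a0: "0 \<le> a" by (simp add: a_def)
  have R: "(\<lambda>d. sqrt (real (d choose n) / real d ^ n) * sqrt (1 - a / real d) ^ (d - n)) \<longlonglongrightarrow> sqrt (1 / fact n) * exp (- a / 2)"
    by (intro tendsto_mult tendsto_real_sqrt binom_lim exp_lim a0)
  have C: "(\<lambda>d. complex_of_real (sqrt (real (d choose n) / real d ^ n) * sqrt (1 - a / real d) ^ (d - n)) * z ^ n)
     \<longlonglongrightarrow> complex_of_real (sqrt (1 / fact n) * exp (- a / 2)) * z ^ n"
    by (intro tendsto_intros R)
  have cohf: "coh z n = complex_of_real (sqrt (1 / fact n) * exp (- a / 2)) * z ^ n"
    by (simp add: coh_def a_def real_sqrt_divide)
  show ?thesis unfolding cohf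
  proof (rule Lim_transform_eventually[OF C])
    show "eventually (\<lambda>d. complex_of_real (sqrt (real (d choose n) / real d ^ n) * sqrt (1 - a / real d) ^ (d - n)) * z ^ n
      = tvec d (spin_coh d (z / complex_of_real (sqrt (real d)))) n) sequentially"
      unfolding eventually_sequentially
    proof (intro exI[of _ "max 1 n"] allI impI)
      fix d assume dd: "max 1 n \<le> d"
      then have d: "1 \<le> d" and n: "n \<le> d" by auto
      have "sqrt (real (d choose n) / real d ^ n) = sqrt (real (d choose n)) / sqrt (real d) ^ n"
        by (simp add: real_sqrt_divide real_sqrt_power)
      then show "complex_of_real (sqrt (real (d choose n) / real d ^ n) * sqrt (1 - a / real d) ^ (d - n)) * z ^ n
        = tvec d (spin_coh d (z / complex_of_real (sqrt (real d)))) n"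
        unfolding u_form[OF d n] a_def by (simp add: power_divide)
    qed
  qed
qed

lemma part2:
  "(\<lambda>d. trace_norm (msub (proj (tvec d (spin_coh d (z / complex_of_real (sqrt (real d))))))
                       (proj (coh z)))) \<longlonglongrightarrow> 0"
proof -
  define u where "u d = tvec d (spin_coh d (z / complex_of_real (sqrt (real d))))" for d
  define v where "v = coh z"
  have su: "summable (\<lambda>n. (cmod (u d n))\<^sup>2)" for d unfolding u_def by (rule u_summable)
  have V1: "(\<lambda>n. (cmod (v n))\<^sup>2) sums 1" unfolding v_def by (rule coh_sums)
  have sv: "summable (\<lambda>n. (cmod (v n))\<^sup>2)" using V1 by (rule sums_summable)
  obtain D :: nat where D: "(cmod z)\<^sup>2 + 1 \<le> real D" using real_arch_simple by blast
  have U1ev: "eventually (\<lambda>d. (\<Sum>n. (cmod (u d n))\<^sup>2) = 1) sequentially"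
    unfolding eventually_sequentially
  proof (intro exI[of _ D] allI impI)
    fix d assume "D \<le> d"
    then have "real D \<le> real d" by simp
    moreover have "0 \<le> (cmod z)\<^sup>2" by simp
    ultimately have "1 \<le> real d" "(cmod z)\<^sup>2 \<le> real d" using D by linarith+
    then have "1 \<le> d" "(cmod z)\<^sup>2 \<le> real d" by simp_all
    then show "(\<Sum>n. (cmod (u d n))\<^sup>2) = 1" unfolding u_def by (rule u_norm1)
  qed
  have S0: "(\<lambda>d. \<Sum>n. (cmod (u d n - v n))\<^sup>2) \<longlonglongrightarrow> 0"
    by (rule l2_conv[OF _ su _ V1]) (use U1ev in \<open>auto simp: u_def v_def u_pw elim: eventually_mono\<close>)
  have SU: "(\<lambda>d. \<Sum>n. (cmod (u d n))\<^sup>2) \<longlonglongrightarrow> 1" by (rule tendsto_eventually[OF U1ev])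
  have SV: "(\<Sum>n. (cmod (v n))\<^sup>2) = 1" using V1 by (simp add: sums_iff)
  have B: "(\<lambda>d. sqrt ((\<Sum>n. (cmod (u d n - v n))\<^sup>2) * (\<Sum>n. (cmod (u d n))\<^sup>2))
           + sqrt ((\<Sum>n. (cmod (v n))\<^sup>2) * (\<Sum>n. (cmod (u d n - v n))\<^sup>2))) \<longlonglongrightarrow> sqrt (0 * 1) + sqrt (1 * 0)"
    unfolding SV by (intro tendsto_intros S0 SU)
  show ?thesis
    unfolding u_def[symmetric] v_def[symmetric]
    by (rule tn_tendsto[OF always_eventually[OF allI[OF tn_proj[OF su sv]]]]) (use B in simp)
qed


theorem mainTheorem6:
  fixes p :: real and z :: complex
  assumes "0 < p" and "p < 1"
  shows
   "(\<lambda>d. trace_norm (msub (Wconj d (rho_spin d p)) (rho_th (p / (1 - p))))) \<longlonglongrightarrow> 0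
  \<and> (\<lambda>d. trace_norm (msub (proj (tvec d (spin_coh d (z / complex_of_real (sqrt (real d))))))
                       (proj (coh z)))) \<longlonglongrightarrow> 0
  \<and> (\<lambda>d. Tr (mmul (Wconj d (rho_spin d p))
        (mmul (adj (msub ann (smul (1 / complex_of_real (sqrt (real d))) (Wconj d (Jplus d)))))
              (msub ann (smul (1 / complex_of_real (sqrt (real d))) (Wconj d (Jplus d))))))) \<longlonglongrightarrow> 0
  \<and> (\<lambda>d. Tr (mmul (Wconj d (rho_spin d p))
        (mmul (adj (msub cre (smul (1 / complex_of_real (sqrt (real d))) (Wconj d (Jminus d)))))
              (msub cre (smul (1 / complex_of_real (sqrt (real d))) (Wconj d (Jminus d))))))) \<longlonglongrightarrow> 0
  \<and> (\<lambda>d. Tr (mmul (Wconj d (rho_spin d p))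
        (mmul (msub Qop (smul (1 / complex_of_real (sqrt (real d / 2))) (Wconj d (J1 d))))
              (msub Qop (smul (1 / complex_of_real (sqrt (real d / 2))) (Wconj d (J1 d))))))) \<longlonglongrightarrow> 0
  \<and> (\<lambda>d. Tr (mmul (Wconj d (rho_spin d p))
        (mmul (msub Pop (smul (1 / complex_of_real (sqrt (real d / 2))) (Wconj d (J2 d))))
              (msub Pop (smul (1 / complex_of_real (sqrt (real d / 2))) (Wconj d (J2 d))))))) \<longlonglongrightarrow> 0
  \<and> (\<lambda>d. Tr (mmul (Wconj d (rho_spin d p)) (mmul Qop Qop)))
        \<longlonglongrightarrow> Tr (mmul (rho_th (p / (1 - p))) (mmul Qop Qop))
  \<and> (\<lambda>d. Tr (mmul (Wconj d (rho_spin d p)) (mmul Pop Pop)))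
        \<longlonglongrightarrow> Tr (mmul (rho_th (p / (1 - p))) (mmul Pop Pop))
  \<and> (\<lambda>d. Tr (mmul (Wconj d (rho_spin d p)) (jordan Qop Pop)))
        \<longlonglongrightarrow> Tr (mmul (rho_th (p / (1 - p))) (jordan Qop Pop))
  \<and> (\<forall>Y \<in> {Qop, Pop}.
        (\<lambda>d. Tr (mmul (Wconj d (rho_spin d p))
           (jordan (msub Qop (smul (1 / complex_of_real (sqrt (real d / 2))) (Wconj d (J1 d)))) Y)))
          \<longlonglongrightarrow> 0
      \<and> (\<lambda>d. Tr (mmul (Wconj d (rho_spin d p))
           (jordan (msub Pop (smul (1 / complex_of_real (sqrt (real d / 2))) (Wconj d (J2 d)))) Y)))
          \<longlonglongrightarrow> 0)"
  proof -
  have p6: "\<forall>Y \<in> {Qop, Pop}.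
        (\<lambda>d. Tr (mmul (Wconj d (rho_spin d p))
           (jordan (msub Qop (smul (1 / complex_of_real (sqrt (real d / 2))) (Wconj d (J1 d)))) Y)))
          \<longlonglongrightarrow> 0
      \<and> (\<lambda>d. Tr (mmul (Wconj d (rho_spin d p))
           (jordan (msub Pop (smul (1 / complex_of_real (sqrt (real d / 2))) (Wconj d (J2 d)))) Y)))
          \<longlonglongrightarrow> 0"
    using part6[OF assms] by blast
  show ?thesis
    using part1[OF assms] part2[of z] part3a[OF assms] part3b[OF assms] part4Q[OF assms] part4P[OF assms]
      part5[OF assms] p6 by (intro conjI) blast+
qed

end
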